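(* Let $k$ be a field of characteristic $p>0$. Then the $k$-algebra $$\Lambda=kQ/\big(\beta^{6p+1},\ \alpha\gamma,\ \alpha(\beta+\beta^2)\gamma,\ \alpha\beta^{2p+1}\gamma\big)$$ (which equals $kQ/I(6p+1;6p+1,6p+1;V)$ with $V=(\beta^{6p+1})+k\cdot1+k(\beta+\beta^2)+k\beta^{2p+1}$) has ordinary quiver $Q$, containing the loop $\beta$, and satisfies $\mathrm{HH}^1(\Lambda)=0$.
   Context: $Q$ is the quiver with vertices $1,2,3$ and arrows $\alpha\colon 2\to1$, $\beta\colon 2\to 2$, $\gamma\colon 3\to 2$; $kQ$ is generated by pairwise orthogonal idempotents $e_1,e_2,e_3$ (sum $1$) and $\alpha,\beta,\gamma$ with $e_1\alpha=\alpha=\alpha e_2$, $e_2\beta=\beta=\beta e_2$, $e_3\gamma=\gamma=\gamma e_2$, $\gamma\alpha=\beta\alpha=\gamma\beta=0$; for $v=\sum_iv_i\beta^i\in k[\beta]$, $\alpha v\gamma=\sum_iv_i\alpha\beta^i\gamma$. $I(n;n,n;V)$ is the two-sided ideal generated by $\alpha\beta^n$, $\beta^n$, $\beta^n\gamma$ and all $\alpha v\gamma$, $v\in V$; the displayed ideal is the two-sided ideal generated by the listed elements. $\mathrm{HH}^1(\Lambda)=\mathrm{Der}_k(\Lambda,\Lambda)/\mathrm{Inn}(\Lambda)$. *)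

theory Defs
  imports "HOL-Algebra.QuotRing"
begin

datatype vert = V1 | V2 | V3
datatype arr = Al | Be | Ga

fun src :: "arr \<Rightarrow> vert" where
  "src Al = V2" | "src Be = V2" | "src Ga = V3"
fun tgt :: "arr \<Rightarrow> vert" where
  "tgt Al = V1" | "tgt Be = V2" | "tgt Ga = V2"

text \<open>Paths are written as products in the algebra (right-to-left composition,
  as in e1 alpha = alpha = alpha e2): the word [x1,...,xn] stands for x1 x2 ... xn,
  which is nonzero iff src x_i = tgt x_(i+1).  Triv v is the idempotent e_v.\<close>

datatype qpath = Triv vert | Arrs "arr list"

fun composable :: "arr list \<Rightarrow> bool" where
  "composable [] = True"
| "composable [x] = True"
| "composable (x # y # zs) = (src x = tgt y \<and> composable (y # zs))"

fun valid_path :: "qpath \<Rightarrow> bool" where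
  "valid_path (Triv v) = True"
| "valid_path (Arrs xs) = (xs \<noteq> [] \<and> composable xs)"

fun plen :: "qpath \<Rightarrow> nat" where
  "plen (Triv v) = 0" | "plen (Arrs xs) = length xs"

text \<open>Product of two paths (None means the product is zero).\<close>
fun pathmult :: "qpath \<Rightarrow> qpath \<Rightarrow> qpath option" where
  "pathmult (Triv v) (Triv w) = (if v = w then Some (Triv v) else None)"
| "pathmult (Triv v) (Arrs ys) =
     (if valid_path (Arrs ys) \<and> tgt (hd ys) = v then Some (Arrs ys) else None)"
| "pathmult (Arrs xs) (Triv w) =
     (if valid_path (Arrs xs) \<and> src (last xs) = w then Some (Arrs xs) else None)"
| "pathmult (Arrs xs) (Arrs ys) =
     (if valid_path (Arrs xs) \<and> valid_path (Arrs ys) \<and> src (last xs) = tgt (hd ys)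
      then Some (Arrs (xs @ ys)) else None)"

definition kQ_carrier :: "(qpath \<Rightarrow> 'k::field) set" where
  "kQ_carrier = {a. finite {q. a q \<noteq> 0} \<and> (\<forall>q. a q \<noteq> 0 \<longrightarrow> valid_path q)}"

definition pa_mult :: "(qpath \<Rightarrow> 'k::field) \<Rightarrow> (qpath \<Rightarrow> 'k) \<Rightarrow> qpath \<Rightarrow> 'k" where
  "pa_mult a b = (\<lambda>w. \<Sum>(u, v) \<in> {(u, v). pathmult u v = Some w}. a u * b v)"

definition pbasis :: "qpath \<Rightarrow> qpath \<Rightarrow> 'k::field" where
  "pbasis q = (\<lambda>r. if r = q then 1 else 0)"

definition pa_add :: "(qpath \<Rightarrow> 'k::field) \<Rightarrow> (qpath \<Rightarrow> 'k) \<Rightarrow> qpath \<Rightarrow> 'k" where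
  "pa_add a b = (\<lambda>q. a q + b q)"

definition pa_one :: "qpath \<Rightarrow> 'k::field" where
  "pa_one = pa_add (pa_add (pbasis (Triv V1)) (pbasis (Triv V2))) (pbasis (Triv V3))"

definition pa_smult :: "'k::field \<Rightarrow> (qpath \<Rightarrow> 'k) \<Rightarrow> qpath \<Rightarrow> 'k" where
  "pa_smult c a = (\<lambda>q. c * a q)"

definition kQ :: "(qpath \<Rightarrow> 'k::field) ring" where
  "kQ = \<lparr>carrier = kQ_carrier, mult = pa_mult, one = pa_one,
         zero = (\<lambda>_. 0), add = pa_add\<rparr>"

definition arrow_ideal_pow :: "nat \<Rightarrow> (qpath \<Rightarrow> 'k::field) set" where
  "arrow_ideal_pow m = {a \<in> kQ_carrier. \<forall>q. a q \<noteq> 0 \<longrightarrow> m \<le> plen q}"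

text \<open>An admissible ideal: R^m \<subseteq> I \<subseteq> R^2 for some m \<ge> 2; for such I the ordinary
  (Gabriel) quiver of kQ/I is Q.\<close>
definition admissible :: "(qpath \<Rightarrow> 'k::field) set \<Rightarrow> bool" where
  "admissible I \<longleftrightarrow> ideal I kQ \<and> I \<subseteq> arrow_ideal_pow 2 \<and> (\<exists>m\<ge>2. arrow_ideal_pow m \<subseteq> I)"

definition betapow :: "nat \<Rightarrow> qpath \<Rightarrow> 'k::field" where
  "betapow n = pbasis (Arrs (replicate n Be))"

definition alpha_beta_gamma :: "nat \<Rightarrow> qpath \<Rightarrow> 'k::field" where
  "alpha_beta_gamma n = pbasis (Arrs (Al # replicate n Be @ [Ga]))"

definition Igens :: "nat \<Rightarrow> (qpath \<Rightarrow> 'k::field) set" where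
  "Igens p = {betapow (6*p+1), alpha_beta_gamma 0,
              pa_add (alpha_beta_gamma 1) (alpha_beta_gamma 2), alpha_beta_gamma (2*p+1)}"

definition Iideal :: "nat \<Rightarrow> (qpath \<Rightarrow> 'k::field) set" where
  "Iideal p = genideal kQ (Igens p)"

definition Lambda :: "nat \<Rightarrow> (qpath \<Rightarrow> 'k::field) set ring" where
  "Lambda p = kQ Quot (Iideal p)"

definition Lscalar :: "nat \<Rightarrow> 'k::field \<Rightarrow> (qpath \<Rightarrow> 'k) set" where
  "Lscalar p c = Iideal p +>\<^bsub>kQ\<^esub> pa_smult c pa_one"

text \<open>k-linear derivations of an algebra A, where sc maps scalars into A.\<close>
definition is_derivation :: "('a, 'm) ring_scheme \<Rightarrow> ('k \<Rightarrow> 'a) \<Rightarrow> ('a \<Rightarrow> 'a) \<Rightarrow> bool" where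
  "is_derivation A sc D \<longleftrightarrow>
     D \<in> carrier A \<rightarrow> carrier A \<and>
     (\<forall>x\<in>carrier A. \<forall>y\<in>carrier A. D (x \<oplus>\<^bsub>A\<^esub> y) = D x \<oplus>\<^bsub>A\<^esub> D y) \<and>
     (\<forall>c. \<forall>x\<in>carrier A. D (sc c \<otimes>\<^bsub>A\<^esub> x) = sc c \<otimes>\<^bsub>A\<^esub> D x) \<and>
     (\<forall>x\<in>carrier A. \<forall>y\<in>carrier A.
        D (x \<otimes>\<^bsub>A\<^esub> y) = (D x \<otimes>\<^bsub>A\<^esub> y) \<oplus>\<^bsub>A\<^esub> (x \<otimes>\<^bsub>A\<^esub> D y))"

definition is_inner_derivation :: "('a, 'm) ring_scheme \<Rightarrow> ('a \<Rightarrow> 'a) \<Rightarrow> bool" where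
  "is_inner_derivation A D \<longleftrightarrow>
     (\<exists>y\<in>carrier A. \<forall>x\<in>carrier A. D x = (y \<otimes>\<^bsub>A\<^esub> x) \<ominus>\<^bsub>A\<^esub> (x \<otimes>\<^bsub>A\<^esub> y))"

text \<open>HH^1(A) = Der_k(A,A)/Inn(A) vanishes iff every k-derivation is inner.\<close>
definition HH1_vanishes :: "('a, 'm) ring_scheme \<Rightarrow> ('k \<Rightarrow> 'a) \<Rightarrow> bool" where
  "HH1_vanishes A sc \<longleftrightarrow> (\<forall>D. is_derivation A sc D \<longrightarrow> is_inner_derivation A D)"

end

theory Submission
  imports Defs
begin

fun tgtp :: "qpath \<Rightarrow> vert" where
  "tgtp (Triv v) = v" | "tgtp (Arrs xs) = tgt (hd xs)"
fun srcp :: "qpath \<Rightarrow> vert" where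
  "srcp (Triv v) = v" | "srcp (Arrs xs) = src (last xs)"

fun pcat :: "qpath \<Rightarrow> qpath \<Rightarrow> qpath" where
  "pcat (Triv v) q = q"
| "pcat (Arrs xs) (Triv w) = Arrs xs"
| "pcat (Arrs xs) (Arrs ys) = Arrs (xs @ ys)"

lemma composable_append:
  "composable (xs @ ys) \<longleftrightarrow> composable xs \<and> composable ys \<and>
     (xs \<noteq> [] \<longrightarrow> ys \<noteq> [] \<longrightarrow> src (last xs) = tgt (hd ys))"
proof (induction xs rule: composable.induct)
  case 1 then show ?case by simp
next
  case (2 x) then show ?case by (cases ys) auto
next
  case (3 x y zs) then show ?case by auto
qed

lemma pathmult_Some:
  "pathmult u v = Some w \<longleftrightarrow> valid_path u \<and> valid_path v \<and> srcp u = tgtp v \<and> w = pcat u v"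
  by (cases u; cases v) auto

lemma valid_pcat:
  "valid_path u \<Longrightarrow> valid_path v \<Longrightarrow> srcp u = tgtp v \<Longrightarrow> valid_path (pcat u v)"
  by (cases u; cases v) (auto simp: composable_append)

lemma tgtp_pcat:
  "valid_path u \<Longrightarrow> valid_path v \<Longrightarrow> srcp u = tgtp v \<Longrightarrow> tgtp (pcat u v) = tgtp u"
  by (cases u; cases v) auto

lemma srcp_pcat:
  "valid_path u \<Longrightarrow> valid_path v \<Longrightarrow> srcp u = tgtp v \<Longrightarrow> srcp (pcat u v) = srcp v"
  by (cases u; cases v) auto

lemma pcat_assoc: "pcat (pcat u v) z = pcat u (pcat v z)"
  by (cases u; cases v; cases z) auto

lemma plen_pcat: "plen (pcat u v) = plen u + plen v"
  by (cases u; cases v) auto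

lemma pathmult_valid: "pathmult u v = Some w \<Longrightarrow> valid_path w"
  by (auto simp: pathmult_Some valid_pcat)

lemma UNIV_vert: "(UNIV :: vert set) = {V1, V2, V3}"
  using vert.exhaust by auto
lemma UNIV_arr: "(UNIV :: arr set) = {Al, Be, Ga}"
  using arr.exhaust by auto
lemma finite_vert[simp]: "finite (UNIV :: vert set)" by (simp add: UNIV_vert)
lemma finite_arr[simp]: "finite (UNIV :: arr set)" by (simp add: UNIV_arr)

definition short_paths :: "nat \<Rightarrow> qpath set" where
  "short_paths n = range Triv \<union> Arrs ` {xs. set xs \<subseteq> UNIV \<and> length xs \<le> n}"

lemma finite_short_paths: "finite (short_paths n)"
  unfolding short_paths_def
  by (intro finite_UnI finite_imageI finite_lists_length_le) auto

lemma in_short_paths: "plen q \<le> n \<Longrightarrow> q \<in> short_paths n"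
  by (cases q) (auto simp: short_paths_def)

definition Spl :: "qpath \<Rightarrow> (qpath \<times> qpath) set" where
  "Spl w = {(u, v). pathmult u v = Some w}"

lemma finite_Spl: "finite (Spl w)"
proof -
  have "Spl w \<subseteq> short_paths (plen w) \<times> short_paths (plen w)"
    by (auto simp: Spl_def pathmult_Some plen_pcat intro!: in_short_paths)
  then show ?thesis
    using finite_short_paths finite_subset by blast
qed

lemma pa_mult_Spl: "pa_mult a b w = (\<Sum>(u, v) \<in> Spl w. a u * b v)"
  by (simp add: pa_mult_def Spl_def)

definition T3 :: "qpath \<Rightarrow> (qpath \<times> qpath \<times> qpath) set" where
  "T3 w = {(u, v, z). valid_path u \<and> valid_path v \<and> valid_path z \<and> srcp u = tgtp v
            \<and> srcp v = tgtp z \<and> w = pcat (pcat u v) z}"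

lemma pa_mult_assoc_left:
  "pa_mult (pa_mult a b) c w = (\<Sum>(u, v, z) \<in> T3 w. a u * b v * c z)"
proof -
  have "pa_mult (pa_mult a b) c w = (\<Sum>(x, z) \<in> Spl w. (\<Sum>(u, v) \<in> Spl x. a u * b v) * c z)"
    by (simp add: pa_mult_Spl)
  also have "\<dots> = (\<Sum>(x, z) \<in> Spl w. (\<Sum>(u, v) \<in> Spl x. a u * b v * c z))"
    by (simp add: sum_distrib_right case_prod_beta)
  also have "\<dots> = (\<Sum>((x, z), (u, v)) \<in> Sigma (Spl w) (\<lambda>(x, z). Spl x). a u * b v * c z)"
    using sum.Sigma[OF finite_Spl, of w "\<lambda>p. Spl (fst p)" "\<lambda>p q. a (fst q) * b (snd q) * c (snd p)"]
    by (simp add: split_def finite_Spl)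
  also have "\<dots> = (\<Sum>(u, v, z) \<in> T3 w. a u * b v * c z)"
    by (rule sum.reindex_bij_witness[where j = "\<lambda>((x, z), (u, v)). (u, v, z)"
          and i = "\<lambda>(u, v, z). ((pcat u v, z), (u, v))"])
       (auto simp: T3_def Spl_def pathmult_Some valid_pcat srcp_pcat)
  finally show ?thesis .
qed

lemma pa_mult_assoc_right:
  "pa_mult a (pa_mult b c) w = (\<Sum>(u, v, z) \<in> T3 w. a u * b v * c z)"
proof -
  have "pa_mult a (pa_mult b c) w = (\<Sum>(u, y) \<in> Spl w. a u * (\<Sum>(v, z) \<in> Spl y. b v * c z))"
    by (simp add: pa_mult_Spl)
  also have "\<dots> = (\<Sum>(u, y) \<in> Spl w. (\<Sum>(v, z) \<in> Spl y. a u * b v * c z))"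
    by (simp add: sum_distrib_left case_prod_beta mult.assoc)
  also have "\<dots> = (\<Sum>((u, y), (v, z)) \<in> Sigma (Spl w) (\<lambda>(u, y). Spl y). a u * b v * c z)"
    using sum.Sigma[OF finite_Spl, of w "\<lambda>p. Spl (snd p)" "\<lambda>p q. a (fst p) * b (fst q) * c (snd q)"]
    by (simp add: split_def finite_Spl)
  also have "\<dots> = (\<Sum>(u, v, z) \<in> T3 w. a u * b v * c z)"
    by (rule sum.reindex_bij_witness[where j = "\<lambda>((u, y), (v, z)). (u, v, z)"
          and i = "\<lambda>(u, v, z). ((u, pcat v z), (v, z))"])
       (auto simp: T3_def Spl_def pathmult_Some valid_pcat tgtp_pcat pcat_assoc)
  finally show ?thesis .
qed

lemma pa_mult_assoc: "pa_mult (pa_mult a b) c = pa_mult a (pa_mult b c)"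
  by (rule ext) (simp add: pa_mult_assoc_left pa_mult_assoc_right)

lemma pa_mult_add_left: "pa_mult (pa_add x y) b = pa_add (pa_mult x b) (pa_mult y b)"
  by (rule ext) (simp add: pa_mult_Spl pa_add_def distrib_right sum.distrib case_prod_beta)

lemma pa_mult_add_right: "pa_mult b (pa_add x y) = pa_add (pa_mult b x) (pa_mult b y)"
  by (rule ext) (simp add: pa_mult_Spl pa_add_def distrib_left sum.distrib case_prod_beta)

lemma pa_mult_pbasis_left:
  "pa_mult (pbasis q) b w = (\<Sum>v \<in> {v. pathmult q v = Some w}. b v)"
proof -
  have "pa_mult (pbasis q) b w = (\<Sum>x \<in> Spl w. if fst x = q then b (snd x) else 0)"
    by (auto simp: pa_mult_Spl pbasis_def case_prod_beta intro!: sum.cong)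
  also have "\<dots> = (\<Sum>x \<in> {x \<in> Spl w. fst x = q}. b (snd x))"
    by (simp add: sum.inter_filter finite_Spl)
  also have "\<dots> = (\<Sum>v \<in> {v. pathmult q v = Some w}. b v)"
    by (rule sum.reindex_bij_witness[where i = "\<lambda>v. (q, v)" and j = snd])
       (auto simp: Spl_def)
  finally show ?thesis .
qed

lemma pa_mult_pbasis_right:
  "pa_mult b (pbasis q) w = (\<Sum>u \<in> {u. pathmult u q = Some w}. b u)"
proof -
  have "pa_mult b (pbasis q) w = (\<Sum>x \<in> Spl w. if snd x = q then b (fst x) else 0)"
    by (auto simp: pa_mult_Spl pbasis_def case_prod_beta intro!: sum.cong)
  also have "\<dots> = (\<Sum>x \<in> {x \<in> Spl w. snd x = q}. b (fst x))"
    by (simp add: sum.inter_filter finite_Spl)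
  also have "\<dots> = (\<Sum>u \<in> {u. pathmult u q = Some w}. b u)"
    by (rule sum.reindex_bij_witness[where i = "\<lambda>u. (u, q)" and j = fst])
       (auto simp: Spl_def)
  finally show ?thesis .
qed

lemma pa_mult_triv_left:
  "pa_mult (pbasis (Triv x)) b w = (if valid_path w \<and> tgtp w = x then b w else 0)"
proof -
  have "pathmult (Triv x) v = Some w \<longleftrightarrow> v = w \<and> valid_path w \<and> tgtp w = x" for v
    by (cases v) (auto split: if_splits)
  then have "{v. pathmult (Triv x) v = Some w} = (if valid_path w \<and> tgtp w = x then {w} else {})"
    by auto
  then show ?thesis by (simp add: pa_mult_pbasis_left)
qed


lemma pa_mult_triv_right:
  "pa_mult b (pbasis (Triv x)) w = (if valid_path w \<and> srcp w = x then b w else 0)"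
proof -
  have "pathmult u (Triv x) = Some w \<longleftrightarrow> u = w \<and> valid_path w \<and> srcp w = x" for u
    by (cases u; cases w) (auto split: if_splits)
  then have "{u. pathmult u (Triv x) = Some w} = (if valid_path w \<and> srcp w = x then {w} else {})"
    by auto
  then show ?thesis by (simp add: pa_mult_pbasis_right)
qed

lemma pa_one_alt: "pa_one = pa_add (pa_add (pbasis (Triv V1)) (pbasis (Triv V2))) (pbasis (Triv V3))"
  by (simp add: pa_one_def)

lemma tgtp_cases: "tgtp w = V1 \<or> tgtp w = V2 \<or> tgtp w = V3"
  by (cases "tgtp w") auto
lemma srcp_cases: "srcp w = V1 \<or> srcp w = V2 \<or> srcp w = V3"
  by (cases "srcp w") auto

lemma pa_one_mult: "b \<in> kQ_carrier \<Longrightarrow> pa_mult pa_one b = b"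
  apply (rule ext)
  subgoal for w
    using tgtp_cases[of w]
    unfolding pa_one_alt pa_mult_add_left
    by (auto simp: pa_add_def pa_mult_triv_left kQ_carrier_def)
  done

lemma pa_mult_one: "b \<in> kQ_carrier \<Longrightarrow> pa_mult b pa_one = b"
  apply (rule ext)
  subgoal for w
    using srcp_cases[of w]
    unfolding pa_one_alt pa_mult_add_right
    by (auto simp: pa_add_def pa_mult_triv_right kQ_carrier_def)
  done

lemma supp_pa_mult:
  "{w. pa_mult a b w \<noteq> 0} \<subseteq> (\<lambda>(u, v). pcat u v) ` ({u. a u \<noteq> 0} \<times> {v. b v \<noteq> 0})"
proof
  fix w assume "w \<in> {w. pa_mult a b w \<noteq> 0}"
  then have "(\<Sum>(u, v) \<in> Spl w. a u * b v) \<noteq> 0" by (simp add: pa_mult_Spl)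
  then obtain x where "x \<in> Spl w" "(case x of (u, v) \<Rightarrow> a u * b v) \<noteq> 0"
    by (rule sum.not_neutral_contains_not_neutral)
  then obtain u v where "(u, v) \<in> Spl w" "a u * b v \<noteq> 0"
    by (cases x) auto
  then show "w \<in> (\<lambda>(u, v). pcat u v) ` ({u. a u \<noteq> 0} \<times> {v. b v \<noteq> 0})"
    by (auto simp: Spl_def pathmult_Some)
qed

lemma pa_mult_valid: "pa_mult a b w \<noteq> 0 \<Longrightarrow> valid_path w"
proof -
  assume "pa_mult a b w \<noteq> 0"
  then have "(\<Sum>(u, v) \<in> Spl w. a u * b v) \<noteq> 0" by (simp add: pa_mult_Spl)
  then obtain x where "x \<in> Spl w"
    by (rule sum.not_neutral_contains_not_neutral)
  then obtain u v where "(u, v) \<in> Spl w"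
    by (cases x) auto
  then show ?thesis by (auto simp: Spl_def pathmult_valid)
qed

lemma pa_mult_closed: "a \<in> kQ_carrier \<Longrightarrow> b \<in> kQ_carrier \<Longrightarrow> pa_mult a b \<in> kQ_carrier"
  unfolding kQ_carrier_def
  using supp_pa_mult[of a b] pa_mult_valid[of a b]
  by (auto intro: finite_subset)

lemma pa_add_closed: "a \<in> kQ_carrier \<Longrightarrow> b \<in> kQ_carrier \<Longrightarrow> pa_add a b \<in> kQ_carrier"
proof -
  assume a: "a \<in> kQ_carrier" and b: "b \<in> kQ_carrier"
  have "{q. pa_add a b q \<noteq> 0} \<subseteq> {q. a q \<noteq> 0} \<union> {q. b q \<noteq> 0}"
    by (auto simp: pa_add_def)
  with a b show ?thesis
    unfolding kQ_carrier_def by (auto simp: pa_add_def intro: finite_subset)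
qed

lemma pa_zero_closed: "(\<lambda>_. 0) \<in> kQ_carrier"
  by (simp add: kQ_carrier_def)

lemma pbasis_closed: "valid_path q \<Longrightarrow> pbasis q \<in> kQ_carrier"
  by (simp add: kQ_carrier_def pbasis_def)

lemma pa_one_closed: "pa_one \<in> kQ_carrier"
  by (simp add: pa_one_alt pa_add_closed pbasis_closed)

lemma neg_closed: "a \<in> kQ_carrier \<Longrightarrow> (\<lambda>q. - a q) \<in> kQ_carrier"
  by (simp add: kQ_carrier_def)

lemma kQ_simps[simp]: "carrier kQ = kQ_carrier" "mult kQ = pa_mult" "one kQ = pa_one"
  "zero kQ = (\<lambda>_. 0)" "add kQ = pa_add"
  by (simp_all add: kQ_def)

lemma ring_kQ: "ring (kQ :: (qpath \<Rightarrow> 'k::field) ring)"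
proof (rule ringI)
  show "abelian_group (kQ :: (qpath \<Rightarrow> 'k::field) ring)"
  proof (rule abelian_groupI)
    fix x assume x: "x \<in> carrier (kQ :: (qpath \<Rightarrow> 'k::field) ring)"
    have "pa_add (\<lambda>q. - x q) x = (\<lambda>_. 0)" by (simp add: pa_add_def)
    with x show "\<exists>y\<in>carrier kQ. y \<oplus>\<^bsub>kQ\<^esub> x = \<zero>\<^bsub>kQ\<^esub>"
      by (intro bexI[of _ "\<lambda>q. - x q"]) (simp_all add: neg_closed)
  next
    fix x y :: "qpath \<Rightarrow> 'k"
    show "x \<oplus>\<^bsub>kQ\<^esub> y = y \<oplus>\<^bsub>kQ\<^esub> x" by (simp add: pa_add_def add.commute)
  next
    fix x y z :: "qpath \<Rightarrow> 'k"
    show "x \<oplus>\<^bsub>kQ\<^esub> y \<oplus>\<^bsub>kQ\<^esub> z = x \<oplus>\<^bsub>kQ\<^esub> (y \<oplus>\<^bsub>kQ\<^esub> z)" by (simp add: pa_add_def add.assoc)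
  next
    fix x :: "qpath \<Rightarrow> 'k"
    show "\<zero>\<^bsub>kQ\<^esub> \<oplus>\<^bsub>kQ\<^esub> x = x" by (simp add: pa_add_def)
  qed (simp_all add: pa_add_closed pa_zero_closed)
  show "monoid (kQ :: (qpath \<Rightarrow> 'k::field) ring)"
    by (rule monoidI) (simp_all add: pa_mult_closed pa_one_closed pa_mult_assoc pa_one_mult pa_mult_one)
qed (simp_all add: pa_mult_add_left pa_mult_add_right)

section \<open>Normal form of paths\<close>

definition mkl :: "bool \<Rightarrow> nat \<Rightarrow> bool \<Rightarrow> arr list" where
  "mkl l n r = (if l then [Al] else []) @ replicate n Be @ (if r then [Ga] else [])"

definition mk :: "bool \<Rightarrow> nat \<Rightarrow> bool \<Rightarrow> qpath" where
  "mk l n r = (if \<not> l \<and> n = 0 \<and> \<not> r then Triv V2 else Arrs (mkl l n r))"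

fun dec :: "qpath \<Rightarrow> (bool \<times> nat \<times> bool) option" where
  "dec (Triv v) = (if v = V2 then Some (False, 0, False) else None)"
| "dec (Arrs xs) = (if valid_path (Arrs xs) then Some (hd xs = Al, count_list xs Be, last xs = Ga) else None)"

lemma composable_replicate_Be: "composable (replicate n Be)"
  apply (induction n)
   apply simp
  apply (case_tac n)
   apply auto
  done

lemma hd_replicate_append: "hd (replicate n x @ ys) = (if n = 0 then hd ys else x)"
  by (cases n) auto

lemma last_replicate_append: "ys \<noteq> [] \<Longrightarrow> last (replicate n x @ ys) = last ys"
  by simp

lemma composable_Al_cons: "composable (Al # ys) \<longleftrightarrow> (ys = [] \<or> (tgt (hd ys) = V2 \<and> composable ys))"
  by (cases ys) auto

lemma composable_Be_cons: "composable (Be # ys) \<longleftrightarrow> (ys = [] \<or> (tgt (hd ys) = V2 \<and> composable ys))"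
  by (cases ys) auto

lemma composable_rep_app:
  "composable (replicate n Be @ ys) \<longleftrightarrow> composable ys \<and> (n \<noteq> 0 \<longrightarrow> ys \<noteq> [] \<longrightarrow> tgt (hd ys) = V2)"
proof (induction n)
  case 0 then show ?case by simp
next
  case (Suc n)
  have "replicate (Suc n) Be @ ys = Be # (replicate n Be @ ys)" by simp
  then show ?case using Suc by (auto simp: composable_Be_cons hd_replicate_append)
qed

lemma tgt_V2: "x \<noteq> Al \<Longrightarrow> tgt x = V2"
  by (cases x) auto

lemma composable_mkl: "composable (mkl l n r)"
proof -
  define ys where "ys = replicate n Be @ (if r then [Ga] else [])"
  have A: "composable ys"
    by (cases r) (auto simp: ys_def composable_rep_app composable_replicate_Be)
  have B: "ys \<noteq> [] \<Longrightarrow> tgt (hd ys) = V2"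
    by (rule tgt_V2) (use hd_in_set[of ys] in \<open>auto simp: ys_def split: if_splits\<close>)
  have "mkl l n r = (if l then Al # ys else ys)" by (simp add: mkl_def ys_def)
  then show ?thesis using A B by (auto simp: composable_Al_cons)
qed

lemma mkl_nonempty: "\<not> (\<not> l \<and> n = 0 \<and> \<not> r) \<Longrightarrow> mkl l n r \<noteq> []"
  by (auto simp: mkl_def)

lemma valid_mk: "valid_path (mk l n r)"
  by (auto simp: mk_def composable_mkl mkl_nonempty)

lemma hd_mkl: "mkl l n r \<noteq> [] \<Longrightarrow> (hd (mkl l n r) = Al) = l"
  by (cases l; cases n; cases r) (auto simp: mkl_def)

lemma last_mkl: "mkl l n r \<noteq> [] \<Longrightarrow> (last (mkl l n r) = Ga) = r"
  by (cases l; cases n; cases r) (auto simp: mkl_def)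

lemma count_replicate_Be: "count_list (replicate n Be) Be = n"
  by (induction n) auto

lemma count_mkl: "count_list (mkl l n r) Be = n"
  by (auto simp: mkl_def count_list_append count_replicate_Be)

lemma dec_mk[simp]: "dec (mk l n r) = Some (l, n, r)"
proof (cases "\<not> l \<and> n = 0 \<and> \<not> r")
  case True
  then show ?thesis by (simp add: mk_def)
next
  case False
  then have ne: "mkl l n r \<noteq> []" by (rule mkl_nonempty)
  have "valid_path (Arrs (mkl l n r))" using ne composable_mkl by simp
  with False ne show ?thesis
    by (simp add: mk_def hd_mkl last_mkl count_mkl)
qed

lemma mk_inj[simp]: "mk l n r = mk l' n' r' \<longleftrightarrow> l = l' \<and> n = n' \<and> r = r'"
proof
  assume "mk l n r = mk l' n' r'"
  then have "dec (mk l n r) = dec (mk l' n' r')" by (rule arg_cong)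
  then show "l = l' \<and> n = n' \<and> r = r'" by (simp only: dec_mk option.inject prod.inject)
qed simp

lemma tgt_ne_V3: "tgt a \<noteq> V3" by (cases a) auto
lemma src_ne_V1: "src a \<noteq> V1" by (cases a) auto

lemma Al_cons_mkl: "Al # mkl False n r = mkl True n r"
  by (simp add: mkl_def)
lemma Be_cons_mkl: "Be # mkl False n r = mkl False (Suc n) r"
  by (simp add: mkl_def)

lemma composable_shape:
  "composable xs \<Longrightarrow> xs \<noteq> [] \<Longrightarrow> xs = mkl (hd xs = Al) (count_list xs Be) (last xs = Ga)"
proof (induction xs rule: composable.induct)
  case 1 then show ?case by simp
next
  case (2 x) then show ?case by (cases x) (auto simp: mkl_def)
next
  case (3 x y zs)
  have IH0: "y # zs = mkl (hd (y # zs) = Al) (count_list (y # zs) Be) (last (y # zs) = Ga)"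
    using 3(2) by (intro 3(1)) auto
  then have IH: "y # zs = mkl (y = Al) (count_list (y # zs) Be) (last (y # zs) = Ga)"
    by (simp only: list.sel(1))
  have c: "src x = tgt y" using 3(2) by simp
  have yA: "y \<noteq> Al" using c src_ne_V1[of x] by auto
  have xG: "x \<noteq> Ga" using c by (cases y) auto
  define c0 where "c0 = count_list (y # zs) Be"
  define r0 where "r0 = (last (y # zs) = Ga)"
  have yA': "(y = Al) = False" using yA by simp
  have IH': "y # zs = mkl False c0 r0" using IH[unfolded yA', folded c0_def r0_def] .
  have l: "last (x # y # zs) = last (y # zs)" by simp
  show ?case
  proof (cases x)
    case Al
    then have eq: "x # y # zs = mkl True c0 r0" using IH' Al_cons_mkl by metis
    have h1: "(hd (x # y # zs) = Al) = True" using Al by simp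
    have h2: "count_list (x # y # zs) Be = c0" using Al by (simp add: c0_def)
    have h3: "(last (x # y # zs) = Ga) = r0" by (simp add: r0_def)
    show ?thesis unfolding h1 h2 h3 by (rule eq)
  next
    case Be
    then have eq: "x # y # zs = mkl False (Suc c0) r0" using IH' Be_cons_mkl by metis
    have h1: "(hd (x # y # zs) = Al) = False" using Be by simp
    have h2: "count_list (x # y # zs) Be = Suc c0" using Be by (simp add: c0_def)
    have h3: "(last (x # y # zs) = Ga) = r0" by (simp add: r0_def)
    show ?thesis unfolding h1 h2 h3 by (rule eq)
  next
    case Ga with xG show ?thesis by simp
  qed
qed

lemma valid_dec_None: "valid_path q \<Longrightarrow> dec q = None \<Longrightarrow> q = Triv V1 \<or> q = Triv V3"
  by (cases q) (auto split: if_splits intro: vert.exhaust)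

lemma dec_Some: "dec q = Some (l, n, r) \<Longrightarrow> q = mk l n r"
proof (cases q)
  case (Triv v)
  then show "dec q = Some (l, n, r) \<Longrightarrow> q = mk l n r"
    by (auto simp: mk_def split: if_splits)
next
  case (Arrs xs)
  assume d: "dec q = Some (l, n, r)"
  with Arrs have v: "xs \<noteq> []" "composable xs"
    and lnr: "l = (hd xs = Al)" "n = count_list xs Be" "r = (last xs = Ga)"
    by (auto split: if_splits)
  have "xs = mkl l n r" using composable_shape[OF v(2) v(1)] lnr by simp
  with Arrs v show ?thesis by (auto simp: mk_def mkl_def)
qed

lemma valid_path_cases:
  "valid_path q \<Longrightarrow> (q = Triv V1 \<Longrightarrow> P) \<Longrightarrow> (q = Triv V3 \<Longrightarrow> P) \<Longrightarrow> (\<And>l n r. q = mk l n r \<Longrightarrow> P) \<Longrightarrow> P"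
  by (cases "dec q") (auto dest: valid_dec_None dec_Some)

lemma tgtp_mk: "tgtp (mk l n r) = (if l then V1 else V2)"
  by (cases l; cases n; cases r) (auto simp: mk_def mkl_def)

lemma srcp_mk: "srcp (mk l n r) = (if r then V3 else V2)"
  by (cases l; cases n; cases r) (auto simp: mk_def mkl_def)

lemma mkl_append: "mkl l n False @ mkl False m r = mkl l (n + m) r"
  by (simp add: mkl_def replicate_add)

lemma pcat_mk: "pcat (mk l n False) (mk False m r) = mk l (n + m) r"
proof -
  consider "\<not> l \<and> n = 0" | "m = 0 \<and> \<not> r" | "\<not> (\<not> l \<and> n = 0)" "\<not> (m = 0 \<and> \<not> r)" by blast
  then show ?thesis
  proof cases
    case 1 then show ?thesis by (simp add: mk_def)
  next
    case 2 then show ?thesis by (cases "\<not> l \<and> n = 0") (simp_all add: mk_def)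
  next
    case 3 then show ?thesis by (auto simp: mk_def mkl_append)
  qed
qed

lemma pcat_mkT_Triv: "pcat (mk l n True) (Triv v) = mk l n True"
  by (simp add: mk_def)

lemma valid_tgt_V2: "valid_path v \<Longrightarrow> tgtp v = V2 \<Longrightarrow> \<exists>m r. v = mk False m r"
  by (erule valid_path_cases) (auto simp: tgtp_mk split: if_splits)

lemma valid_src_V2: "valid_path v \<Longrightarrow> srcp v = V2 \<Longrightarrow> \<exists>l m. v = mk l m False"
  by (erule valid_path_cases) (auto simp: srcp_mk split: if_splits)

lemma valid_tgt_V3: "valid_path v \<Longrightarrow> tgtp v = V3 \<Longrightarrow> v = Triv V3"
  by (erule valid_path_cases) (auto simp: tgtp_mk split: if_splits)

lemma valid_src_V1: "valid_path v \<Longrightarrow> srcp v = V1 \<Longrightarrow> v = Triv V1"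
  by (erule valid_path_cases) (auto simp: srcp_mk split: if_splits)

lemma pathmult_mk_left_iff:
  "pathmult (mk l0 n0 False) v = Some w \<longleftrightarrow> (\<exists>m r. v = mk False m r \<and> w = mk l0 (n0 + m) r)"
proof
  assume h: "pathmult (mk l0 n0 False) v = Some w"
  then have "valid_path v" "tgtp v = V2" "w = pcat (mk l0 n0 False) v"
    by (simp_all add: pathmult_Some srcp_mk)
  then obtain m r where "v = mk False m r" using valid_tgt_V2 by blast
  with \<open>w = pcat (mk l0 n0 False) v\<close> show "\<exists>m r. v = mk False m r \<and> w = mk l0 (n0 + m) r"
    by (auto simp: pcat_mk)
next
  assume "\<exists>m r. v = mk False m r \<and> w = mk l0 (n0 + m) r"
  then obtain m r where "v = mk False m r" "w = mk l0 (n0 + m) r" by blast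
  then show "pathmult (mk l0 n0 False) v = Some w"
    by (simp add: pathmult_Some valid_mk srcp_mk tgtp_mk pcat_mk)
qed

lemma pathmult_mk_right_iff:
  "pathmult u (mk False n0 r0) = Some w \<longleftrightarrow> (\<exists>l m. u = mk l m False \<and> w = mk l (m + n0) r0)"
proof
  assume h: "pathmult u (mk False n0 r0) = Some w"
  then have "valid_path u" "srcp u = V2" "w = pcat u (mk False n0 r0)"
    by (simp_all add: pathmult_Some tgtp_mk)
  then obtain l m where "u = mk l m False" using valid_src_V2 by blast
  with \<open>w = pcat u (mk False n0 r0)\<close> show "\<exists>l m. u = mk l m False \<and> w = mk l (m + n0) r0"
    by (auto simp: pcat_mk)
next
  assume "\<exists>l m. u = mk l m False \<and> w = mk l (m + n0) r0"
  then obtain l m where "u = mk l m False" "w = mk l (m + n0) r0" by blast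
  then show "pathmult u (mk False n0 r0) = Some w"
    by (simp add: pathmult_Some valid_mk srcp_mk tgtp_mk pcat_mk)
qed

lemma pa_mult_mk_left:
  "pa_mult (pbasis (mk l0 n0 False)) x w =
     (case dec w of None \<Rightarrow> 0 | Some (l, n, r) \<Rightarrow> if l = l0 \<and> n0 \<le> n then x (mk False (n - n0) r) else 0)"
proof (cases "dec w")
  case None
  then have "{v. pathmult (mk l0 n0 False) v = Some w} = {}"
    by (auto simp: pathmult_mk_left_iff)
  then show ?thesis using None by (simp add: pa_mult_pbasis_left)
next
  case (Some t)
  then obtain l n r where t: "dec w = Some (l, n, r)" by (cases t) auto
  then have w: "w = mk l n r" by (rule dec_Some)
  have "{v. pathmult (mk l0 n0 False) v = Some w} = (if l = l0 \<and> n0 \<le> n then {mk False (n - n0) r} else {})"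
    using w by (auto simp: pathmult_mk_left_iff)
  then show ?thesis using t by (simp add: pa_mult_pbasis_left)
qed

lemma pa_mult_mk_right:
  "pa_mult x (pbasis (mk False n0 r0)) w =
     (case dec w of None \<Rightarrow> 0 | Some (l, n, r) \<Rightarrow> if r = r0 \<and> n0 \<le> n then x (mk l (n - n0) False) else 0)"
proof (cases "dec w")
  case None
  then have "{u. pathmult u (mk False n0 r0) = Some w} = {}"
    by (auto simp: pathmult_mk_right_iff)
  then show ?thesis using None by (simp add: pa_mult_pbasis_right)
next
  case (Some t)
  then obtain l n r where t: "dec w = Some (l, n, r)" by (cases t) auto
  then have w: "w = mk l n r" by (rule dec_Some)
  have "{u. pathmult u (mk False n0 r0) = Some w} = (if r = r0 \<and> n0 \<le> n then {mk l (n - n0) False} else {})"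
    using w by (auto simp: pathmult_mk_right_iff)
  then show ?thesis using t by (simp add: pa_mult_pbasis_right)
qed

lemma pathmult_mkT_left_iff:
  "pathmult (mk l0 n0 True) v = Some w \<longleftrightarrow> v = Triv V3 \<and> w = mk l0 n0 True"
proof
  assume h: "pathmult (mk l0 n0 True) v = Some w"
  then have "valid_path v" "tgtp v = V3" "w = pcat (mk l0 n0 True) v"
    by (simp_all add: pathmult_Some srcp_mk)
  then show "v = Triv V3 \<and> w = mk l0 n0 True"
    using valid_tgt_V3 pcat_mkT_Triv by metis
next
  assume "v = Triv V3 \<and> w = mk l0 n0 True"
  then show "pathmult (mk l0 n0 True) v = Some w"
    by (simp add: pathmult_Some valid_mk srcp_mk pcat_mkT_Triv)
qed

lemma pathmult_mkT_right_iff: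
  "pathmult u (mk True n0 r0) = Some w \<longleftrightarrow> u = Triv V1 \<and> w = mk True n0 r0"
proof
  assume h: "pathmult u (mk True n0 r0) = Some w"
  then have "valid_path u" "srcp u = V1" "w = pcat u (mk True n0 r0)"
    by (simp_all add: pathmult_Some tgtp_mk)
  then show "u = Triv V1 \<and> w = mk True n0 r0"
    using valid_src_V1 pcat.simps(1) by metis
next
  assume "u = Triv V1 \<and> w = mk True n0 r0"
  then show "pathmult u (mk True n0 r0) = Some w"
    by (simp add: pathmult_Some valid_mk tgtp_mk)
qed

lemma pa_mult_mkT_left:
  "pa_mult (pbasis (mk l0 n0 True)) x w = (if w = mk l0 n0 True then x (Triv V3) else 0)"
proof -
  have "{v. pathmult (mk l0 n0 True) v = Some w} = (if w = mk l0 n0 True then {Triv V3} else {})"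
    by (simp add: pathmult_mkT_left_iff)
  then show ?thesis by (simp add: pa_mult_pbasis_left)
qed

lemma pa_mult_mkT_right:
  "pa_mult x (pbasis (mk True n0 r0)) w = (if w = mk True n0 r0 then x (Triv V1) else 0)"
proof -
  have "{u. pathmult u (mk True n0 r0) = Some w} = (if w = mk True n0 r0 then {Triv V1} else {})"
    by (simp add: pathmult_mkT_right_iff)
  then show ?thesis by (simp add: pa_mult_pbasis_right)
qed

lemma carrier_induct:
  assumes x: "x \<in> kQ_carrier" and P0: "P (\<lambda>_. 0)"
    and step: "\<And>y q c. y \<in> kQ_carrier \<Longrightarrow> P y \<Longrightarrow> valid_path q \<Longrightarrow> c \<noteq> 0 \<Longrightarrow> y q = 0
                 \<Longrightarrow> P (pa_add y (pa_smult c (pbasis q)))"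
  shows "P x"
proof -
  have "\<forall>x. x \<in> kQ_carrier \<longrightarrow> {q. x q \<noteq> 0} \<subseteq> F \<longrightarrow> P x" if "finite F" for F
    using that
  proof (induction F rule: finite_induct)
    case empty
    show ?case
    proof (intro allI impI)
      fix x :: "qpath \<Rightarrow> 'a" assume "{q. x q \<noteq> 0} \<subseteq> {}"
      then have "x = (\<lambda>_. 0)" by auto
      then show "P x" using P0 by simp
    qed
  next
    case (insert q F)
    show ?case
    proof (intro allI impI)
      fix x :: "qpath \<Rightarrow> 'a" assume xc: "x \<in> kQ_carrier" and sx: "{q. x q \<noteq> 0} \<subseteq> insert q F"
      define y where "y = x(q := 0)"
      have yc: "y \<in> kQ_carrier" using xc unfolding kQ_carrier_def y_def
        by (auto intro: finite_subset[of _ "{q. x q \<noteq> 0}"])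
      have sy: "{q. y q \<noteq> 0} \<subseteq> F" using sx by (auto simp: y_def)
      have Py: "P y" using insert.IH yc sy by blast
      show "P x"
      proof (cases "x q = 0")
        case True
        then have "x = y" by (auto simp: y_def)
        then show ?thesis using Py by simp
      next
        case False
        then have vq: "valid_path q" using xc by (auto simp: kQ_carrier_def)
        have "x = pa_add y (pa_smult (x q) (pbasis q))"
          by (auto simp: y_def pa_add_def pa_smult_def pbasis_def)
        then show ?thesis using step[OF yc Py vq False] by (simp add: y_def)
      qed
    qed
  qed
  then show ?thesis using x by (auto simp: kQ_carrier_def)
qed

lemma pa_mult_smult_left: "pa_mult (pa_smult c a) b = pa_smult c (pa_mult a b)"
  by (rule ext) (simp add: pa_mult_Spl pa_smult_def sum_distrib_left case_prod_beta mult.assoc)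

lemma pa_mult_smult_right: "pa_mult a (pa_smult c b) = pa_smult c (pa_mult a b)"
  by (rule ext) (simp add: pa_mult_Spl pa_smult_def sum_distrib_left case_prod_beta mult.assoc mult.left_commute)

lemma pa_mult_zero_left: "pa_mult (\<lambda>_. 0) b = (\<lambda>_. 0)"
  by (rule ext) (simp add: pa_mult_Spl)

lemma pa_mult_zero_right: "pa_mult b (\<lambda>_. 0) = (\<lambda>_. 0)"
  by (rule ext) (simp add: pa_mult_Spl)

lemma smult_one_mult: "b \<in> kQ_carrier \<Longrightarrow> pa_mult (pa_smult c pa_one) b = pa_smult c b"
  by (simp add: pa_mult_smult_left pa_one_mult)

lemma smult_closed: "a \<in> kQ_carrier \<Longrightarrow> pa_smult c a \<in> kQ_carrier"
  unfolding kQ_carrier_def pa_smult_def by (auto intro: finite_subset[of _ "{q. a q \<noteq> 0}"])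

lemma kQ_a_inv: "a \<in> kQ_carrier \<Longrightarrow> a_inv kQ a = (\<lambda>q. - a q)"
proof -
  interpret ring kQ by (rule ring_kQ)
  assume a: "a \<in> kQ_carrier"
  show ?thesis
    by (rule minus_equality) (use a in \<open>auto simp: pa_add_def neg_closed\<close>)
qed

lemma kQ_subgroup:
  assumes "H \<subseteq> kQ_carrier" "(\<lambda>_. 0) \<in> H"
    and "\<And>a b. a \<in> H \<Longrightarrow> b \<in> H \<Longrightarrow> pa_add a b \<in> H"
    and "\<And>a. a \<in> H \<Longrightarrow> (\<lambda>q. - a q) \<in> H"
  shows "subgroup H (add_monoid (kQ :: (qpath \<Rightarrow> 'k::field) ring))"
proof -
  interpret ring "kQ :: (qpath \<Rightarrow> 'k::field) ring" by (rule ring_kQ)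
  show ?thesis
    apply (rule add.subgroupI)
    subgoal using assms(1) by simp
    subgoal using assms(2) by blast
    subgoal for a
    proof -
      assume aH: "a \<in> H"
      then have "a \<in> kQ_carrier" using assms(1) by blast
      then have "a_inv (kQ :: (qpath \<Rightarrow> 'k::field) ring) a = (\<lambda>q. - a q)" by (rule kQ_a_inv)
      then show ?thesis using assms(4)[OF aH] by (simp add: a_inv_def)
    qed
    subgoal using assms(3) by simp
    done
qed

lemma ideal_smult:
  assumes "ideal I (kQ :: (qpath \<Rightarrow> 'k::field) ring)" "a \<in> I"
  shows "pa_smult c a \<in> I"
proof -
  interpret ideal I "kQ :: (qpath \<Rightarrow> 'k::field) ring" by fact
  have "a \<in> kQ_carrier" using assms(2) a_subset by auto
  then have "pa_smult c a = pa_mult (pa_smult c pa_one) a" by (simp add: smult_one_mult)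
  also have "\<dots> \<in> I" using I_l_closed[OF assms(2), of "pa_smult c pa_one"]
    by (simp add: smult_closed pa_one_closed)
  finally show ?thesis .
qed

lemma span_in_ideal:
  assumes I: "ideal I (kQ :: (qpath \<Rightarrow> 'k::field) ring)" and x: "x \<in> kQ_carrier"
    and h: "\<And>q. x q \<noteq> 0 \<Longrightarrow> pbasis q \<in> I"
  shows "x \<in> I"
proof -
  interpret ideal I "kQ :: (qpath \<Rightarrow> 'k::field) ring" by fact
  have "(\<forall>q. x q \<noteq> 0 \<longrightarrow> pbasis q \<in> I) \<longrightarrow> x \<in> I"
  proof (rule carrier_induct[OF x])
    show "(\<forall>q. (\<lambda>_. 0::'k) q \<noteq> 0 \<longrightarrow> pbasis q \<in> I) \<longrightarrow> (\<lambda>_. 0) \<in> I"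
      using additive_subgroup.zero_closed[OF is_additive_subgroup] by simp
  next
    fix y :: "qpath \<Rightarrow> 'k" and q and c :: 'k
    assume yc: "y \<in> kQ_carrier" and IH: "(\<forall>q. y q \<noteq> 0 \<longrightarrow> pbasis q \<in> I) \<longrightarrow> y \<in> I"
      and vq: "valid_path q" and c: "c \<noteq> 0" and yq: "y q = 0"
    show "(\<forall>q'. pa_add y (pa_smult c (pbasis q)) q' \<noteq> 0 \<longrightarrow> pbasis q' \<in> I) \<longrightarrow>
          pa_add y (pa_smult c (pbasis q)) \<in> I"
    proof
      assume H: "\<forall>q'. pa_add y (pa_smult c (pbasis q)) q' \<noteq> 0 \<longrightarrow> pbasis q' \<in> I"
      have "\<forall>q'. y q' \<noteq> 0 \<longrightarrow> pbasis q' \<in> I"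
      proof (intro allI impI)
        fix q' assume "y q' \<noteq> 0"
        then have "q' \<noteq> q" using yq by auto
        then have "pa_add y (pa_smult c (pbasis q)) q' = y q'"
          by (simp add: pa_add_def pa_smult_def pbasis_def)
        then show "pbasis q' \<in> I" using H \<open>y q' \<noteq> 0\<close> by metis
      qed
      then have "y \<in> I" using IH by blast
      moreover have "pbasis q \<in> I"
        using H c yq by (auto simp: pa_add_def pa_smult_def pbasis_def)
      then have "pa_smult c (pbasis q) \<in> I" by (rule ideal_smult[OF I])
      ultimately show "pa_add y (pa_smult c (pbasis q)) \<in> I"
        using additive_subgroup.a_closed[OF is_additive_subgroup] by simp
    qed
  qed
  then show ?thesis using h by blast
qed

section \<open>Coefficient polynomials\<close>

definition poly :: "bool \<Rightarrow> bool \<Rightarrow> (nat \<Rightarrow> 'k::field) \<Rightarrow> qpath \<Rightarrow> 'k" where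
  "poly l r f q = (case dec q of None \<Rightarrow> 0 | Some (l', n, r') \<Rightarrow> if l' = l \<and> r' = r then f n else 0)"

definition sh :: "nat \<Rightarrow> (nat \<Rightarrow> 'k::field) \<Rightarrow> nat \<Rightarrow> 'k" where
  "sh m f n = (if m \<le> n then f (n - m) else 0)"

definition delta :: "nat \<Rightarrow> nat \<Rightarrow> 'k::field" where
  "delta n m = (if m = n then 1 else 0)"

definition fin :: "(nat \<Rightarrow> 'k::field) \<Rightarrow> bool" where
  "fin f \<longleftrightarrow> finite {n. f n \<noteq> 0}"

lemma poly_mk[simp]: "poly l r f (mk l' n r') = (if l' = l \<and> r' = r then f n else 0)"
  by (simp add: poly_def)

lemma poly_Triv1[simp]: "poly l r f (Triv V1) = 0"
  by (simp add: poly_def)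
lemma poly_Triv3[simp]: "poly l r f (Triv V3) = 0"
  by (simp add: poly_def)

lemma poly_closed: "fin f \<Longrightarrow> poly l r f \<in> kQ_carrier"
proof -
  assume f: "fin f"
  have "{q. poly l r f q \<noteq> 0} \<subseteq> (\<lambda>n. mk l n r) ` {n. f n \<noteq> 0}"
  proof
    fix q assume "q \<in> {q. poly l r f q \<noteq> 0}"
    then obtain l' n r' where "dec q = Some (l', n, r')" and "l' = l \<and> r' = r \<and> f n \<noteq> 0"
      by (auto simp: poly_def split: option.splits if_splits)
    then show "q \<in> (\<lambda>n. mk l n r) ` {n. f n \<noteq> 0}" by (auto dest: dec_Some)
  qed
  moreover have "poly l r f q \<noteq> 0 \<Longrightarrow> valid_path q" for q
    by (auto simp: poly_def split: option.splits if_splits dest!: dec_Some intro: valid_mk)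
  ultimately show ?thesis using f unfolding kQ_carrier_def fin_def
    by (auto intro: finite_subset)
qed

lemma pbasis_mk: "pbasis (mk l n r) = poly l r (delta n)"
proof (rule ext)
  fix w
  show "pbasis (mk l n r) w = poly l r (delta n) w"
  proof (cases "dec w")
    case None
    then have "w \<noteq> mk l n r" by auto
    then show ?thesis using None by (simp add: pbasis_def poly_def)
  next
    case (Some t)
    then obtain l' n' r' where "dec w = Some (l', n', r')" by (cases t) auto
    then have "w = mk l' n' r'" by (rule dec_Some)
    then show ?thesis by (auto simp: pbasis_def delta_def)
  qed
qed

lemma fin_delta: "fin (delta n)"
  by (simp add: fin_def delta_def)

lemma fin_sh: "fin f \<Longrightarrow> fin (sh m f)"
proof -
  assume "fin f"
  moreover have "{n. sh m f n \<noteq> 0} \<subseteq> (\<lambda>n. n + m) ` {n. f n \<noteq> 0}"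
    by (auto simp: sh_def image_iff intro!: exI[of _ "_ - m"] split: if_splits)
  ultimately show ?thesis unfolding fin_def by (auto intro: finite_subset)
qed

lemma fin_add: "fin f \<Longrightarrow> fin g \<Longrightarrow> fin (\<lambda>n. f n + g n)"
  unfolding fin_def by (rule finite_subset[of _ "{n. f n \<noteq> 0} \<union> {n. g n \<noteq> 0}"]) auto

lemma fin_scale: "fin f \<Longrightarrow> fin (\<lambda>n. c * f n)"
  unfolding fin_def by (rule finite_subset[of _ "{n. f n \<noteq> 0}"]) auto

lemma fin_neg: "fin f \<Longrightarrow> fin (\<lambda>n. - f n)"
  unfolding fin_def by simp

lemma sh_0[simp]: "sh 0 f = f"
  by (rule ext) (simp add: sh_def)

lemma sh_sh: "sh m (sh k f) = sh (m + k) f"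
  by (rule ext) (auto simp: sh_def diff_diff_left)

lemma sh_delta: "sh m (delta n) = delta (m + n)"
  by (rule ext) (auto simp: sh_def delta_def)

lemma poly_add: "pa_add (poly l r f) (poly l r g) = poly l r (\<lambda>n. f n + g n)"
  by (rule ext) (simp add: pa_add_def poly_def split: option.splits)

lemma poly_smult: "pa_smult c (poly l r f) = poly l r (\<lambda>n. c * f n)"
  by (rule ext) (simp add: pa_smult_def poly_def split: option.splits)

lemma tgtp_dec: "dec w = Some (l, n, r) \<Longrightarrow> tgtp w = (if l then V1 else V2)"
  by (auto dest!: dec_Some simp: tgtp_mk)
lemma srcp_dec: "dec w = Some (l, n, r) \<Longrightarrow> srcp w = (if r then V3 else V2)"
  by (auto dest!: dec_Some simp: srcp_mk)
lemma valid_dec: "dec w = Some t \<Longrightarrow> valid_path w"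
  by (cases t) (auto dest!: dec_Some simp: valid_mk)

lemma poly_mult_mk_left:
  "pa_mult (pbasis (mk l0 n0 False)) (poly l r f) = (if l then (\<lambda>_. 0) else poly l0 r (sh n0 f))"
  by (rule ext) (auto simp: pa_mult_mk_left poly_def sh_def split: option.splits)

lemma poly_mult_mk_right:
  "pa_mult (poly l r f) (pbasis (mk False n0 r0)) = (if r then (\<lambda>_. 0) else poly l r0 (sh n0 f))"
  by (rule ext) (auto simp: pa_mult_mk_right poly_def sh_def split: option.splits)

lemma poly_mult_mkT_left:
  "pa_mult (pbasis (mk l0 n0 True)) (poly l r f) = (\<lambda>_. 0)"
  by (rule ext) (simp add: pa_mult_mkT_left)

lemma poly_mult_mkT_right:
  "pa_mult (poly l r f) (pbasis (mk True n0 r0)) = (\<lambda>_. 0)"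
  by (rule ext) (simp add: pa_mult_mkT_right)

lemma poly_mult_e1_left:
  "pa_mult (pbasis (Triv V1)) (poly l r f) = (if l then poly l r f else (\<lambda>_. 0))"
  by (rule ext) (auto simp: pa_mult_triv_left poly_def tgtp_dec dest: valid_dec split: option.splits)
lemma poly_mult_e3_left:
  "pa_mult (pbasis (Triv V3)) (poly l r f) = (\<lambda>_. 0)"
  by (rule ext) (auto simp: pa_mult_triv_left poly_def tgtp_dec dest: valid_dec split: option.splits)
lemma poly_mult_e3_right:
  "pa_mult (poly l r f) (pbasis (Triv V3)) = (if r then poly l r f else (\<lambda>_. 0))"
  by (rule ext) (auto simp: pa_mult_triv_right poly_def srcp_dec dest: valid_dec split: option.splits)
lemma poly_mult_e1_right:
  "pa_mult (poly l r f) (pbasis (Triv V1)) = (\<lambda>_. 0)"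
  by (rule ext) (auto simp: pa_mult_triv_right poly_def srcp_dec dest: valid_dec split: option.splits)

lemma e2_mk: "Triv V2 = mk False 0 False"
  by (simp add: mk_def)

lemma corner:
  assumes x: "x \<in> kQ_carrier"
  shows "pa_mult (pa_mult (pbasis (Triv (if l then V1 else V2))) x) (pbasis (Triv (if r then V3 else V2)))
         = poly l r (\<lambda>n. x (mk l n r))"
proof (rule ext)
  fix w
  show "pa_mult (pa_mult (pbasis (Triv (if l then V1 else V2))) x) (pbasis (Triv (if r then V3 else V2))) w
         = poly l r (\<lambda>n. x (mk l n r)) w"
  proof (cases "dec w")
    case None
    then show ?thesis using x
      by (cases "valid_path w")
         (auto simp: pa_mult_triv_right pa_mult_triv_left poly_def kQ_carrier_def
               dest!: valid_dec_None split: if_splits)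
  next
    case (Some t)
    then obtain l' n' r' where d: "dec w = Some (l', n', r')" by (cases t) auto
    then have "w = mk l' n' r'" by (rule dec_Some)
    then show ?thesis using d
      by (auto simp: pa_mult_triv_right pa_mult_triv_left valid_mk tgtp_mk srcp_mk)
  qed
qed

section \<open>An explicit ideal containing I\<close>

definition Vc :: "nat \<Rightarrow> (nat \<Rightarrow> 'k::field) \<Rightarrow> bool" where
  "Vc p g \<longleftrightarrow> (\<forall>i<6*p+1. i \<noteq> 0 \<and> i \<noteq> 1 \<and> i \<noteq> 2 \<and> i \<noteq> 2*p+1 \<longrightarrow> g i = 0) \<and> g 1 = g 2"

definition Jset :: "nat \<Rightarrow> (qpath \<Rightarrow> 'k::field) set" where
  "Jset p = {a \<in> kQ_carrier. a (Triv V1) = 0 \<and> a (Triv V3) = 0 \<and>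
      (\<forall>l n r. n < 6*p+1 \<and> \<not> (l \<and> r) \<longrightarrow> a (mk l n r) = 0) \<and> Vc p (\<lambda>n. a (mk True n True))}"

lemma Vc_zero: "p > 0 \<Longrightarrow> (\<And>i. i < 6*p+1 \<Longrightarrow> g i = 0) \<Longrightarrow> Vc p g"
  unfolding Vc_def by auto

lemma Vc_add: "Vc p f \<Longrightarrow> Vc p g \<Longrightarrow> Vc p (\<lambda>n. f n + g n)"
  unfolding Vc_def by auto

lemma Vc_scale: "Vc p f \<Longrightarrow> Vc p (\<lambda>n. c * f n)"
  unfolding Vc_def by auto

lemma J_zero: "p > 0 \<Longrightarrow> (\<lambda>_. 0) \<in> Jset p"
  by (auto simp: Jset_def pa_zero_closed intro: Vc_zero)

lemma J_add: "a \<in> Jset p \<Longrightarrow> b \<in> Jset p \<Longrightarrow> pa_add a b \<in> Jset p"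
proof -
  assume a: "a \<in> Jset p" and b: "b \<in> Jset p"
  have "(\<lambda>q. a q + b q) \<in> kQ_carrier"
    using pa_add_closed[of a b] a b by (simp add: Jset_def pa_add_def)
  then show ?thesis using a b unfolding Jset_def by (auto simp: pa_add_def intro: Vc_add)
qed

lemma J_smult: "a \<in> Jset p \<Longrightarrow> pa_smult c a \<in> Jset p"
proof -
  assume a: "a \<in> Jset p"
  have "(\<lambda>q. c * a q) \<in> kQ_carrier"
    using smult_closed[of a c] a by (simp add: Jset_def pa_smult_def)
  then show ?thesis using a unfolding Jset_def by (auto simp: pa_smult_def intro: Vc_scale)
qed

lemma J_neg: "a \<in> Jset p \<Longrightarrow> (\<lambda>q. - a q) \<in> Jset p"
proof -
  assume "a \<in> Jset p"
  then have "pa_smult (-1) a \<in> Jset p" by (rule J_smult)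
  then show ?thesis by (simp add: pa_smult_def)
qed

lemma J_carrier: "Jset p \<subseteq> kQ_carrier"
  by (auto simp: Jset_def)

lemma J_mask:
  assumes a: "a \<in> Jset p" and P: "\<And>n. P (mk True n True) = b"
  shows "(\<lambda>w. if P w then a w else 0) \<in> Jset p"
proof -
  have c: "a \<in> kQ_carrier" using a by (simp add: Jset_def)
  have "(\<lambda>w. if P w then a w else 0) \<in> kQ_carrier"
    using c unfolding kQ_carrier_def by (auto intro: finite_subset[of _ "{q. a q \<noteq> 0}"])
  moreover have "Vc p (\<lambda>n. if P (mk True n True) then a (mk True n True) else 0)"
    using a P unfolding Jset_def Vc_def by (cases b) auto
  ultimately show ?thesis using a unfolding Jset_def by auto
qed

lemma J_left_basis:
  assumes p: "p > 0" and a: "a \<in> Jset p" and q: "valid_path q"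
  shows "pa_mult (pbasis q) a \<in> Jset p"
proof -
  have ac: "a \<in> kQ_carrier" using a by (simp add: Jset_def)
  from q show ?thesis
  proof (rule valid_path_cases)
    assume "q = Triv V1"
    moreover have "pa_mult (pbasis (Triv V1)) a = (\<lambda>w. if valid_path w \<and> tgtp w = V1 then a w else 0)"
      by (rule ext) (simp add: pa_mult_triv_left)
    ultimately show ?thesis
      using J_mask[OF a, of "\<lambda>w. valid_path w \<and> tgtp w = V1" True]
      by (simp add: valid_mk tgtp_mk)
  next
    assume "q = Triv V3"
    moreover have "pa_mult (pbasis (Triv V3)) a = (\<lambda>w. if valid_path w \<and> tgtp w = V3 then a w else 0)"
      by (rule ext) (simp add: pa_mult_triv_left)
    ultimately show ?thesis
      using J_mask[OF a, of "\<lambda>w. valid_path w \<and> tgtp w = V3" False]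
      by (simp add: valid_mk tgtp_mk)
  next
    fix l0 n0 r0 assume qe: "q = mk l0 n0 r0"
    show ?thesis
    proof (cases r0)
      case True
      have "pa_mult (pbasis q) a = (\<lambda>_. 0)"
        using a qe True by (auto simp: pa_mult_mkT_left Jset_def)
      then show ?thesis using J_zero[OF p] by simp
    next
      case False
      have cl: "pa_mult (pbasis q) a \<in> kQ_carrier"
        using ac q by (simp add: pa_mult_closed pbasis_closed)
      have short: "a (mk False m r) = 0" if "m < 6*p+1" for m r
        using a that by (auto simp: Jset_def)
      have val: "pa_mult (pbasis q) a (mk l n r) =
                 (if l = l0 \<and> n0 \<le> n then a (mk False (n - n0) r) else 0)" for l n r
        using qe False by (simp add: pa_mult_mk_left)
      have z: "pa_mult (pbasis q) a (mk l n r) = 0" if "n < 6*p+1" for l n r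
        using val[of l n r] short[of "n - n0" r] that by auto
      have t1: "pa_mult (pbasis q) a (Triv V1) = 0" "pa_mult (pbasis q) a (Triv V3) = 0"
        using qe False by (simp_all add: pa_mult_mk_left)
      show ?thesis
        unfolding Jset_def using cl t1 z by (auto intro!: Vc_zero[OF p])
    qed
  qed
qed

lemma J_right_basis:
  assumes p: "p > 0" and a: "a \<in> Jset p" and q: "valid_path q"
  shows "pa_mult a (pbasis q) \<in> Jset p"
proof -
  have ac: "a \<in> kQ_carrier" using a by (simp add: Jset_def)
  from q show ?thesis
  proof (rule valid_path_cases)
    assume "q = Triv V3"
    moreover have "pa_mult a (pbasis (Triv V3)) = (\<lambda>w. if valid_path w \<and> srcp w = V3 then a w else 0)"
      by (rule ext) (simp add: pa_mult_triv_right)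
    ultimately show ?thesis
      using J_mask[OF a, of "\<lambda>w. valid_path w \<and> srcp w = V3" True]
      by (simp add: valid_mk srcp_mk)
  next
    assume "q = Triv V1"
    moreover have "pa_mult a (pbasis (Triv V1)) = (\<lambda>w. if valid_path w \<and> srcp w = V1 then a w else 0)"
      by (rule ext) (simp add: pa_mult_triv_right)
    ultimately show ?thesis
      using J_mask[OF a, of "\<lambda>w. valid_path w \<and> srcp w = V1" False]
      by (simp add: valid_mk srcp_mk)
  next
    fix l0 n0 r0 assume qe: "q = mk l0 n0 r0"
    show ?thesis
    proof (cases l0)
      case True
      have "pa_mult a (pbasis q) = (\<lambda>_. 0)"
        using a qe True by (auto simp: pa_mult_mkT_right Jset_def)
      then show ?thesis using J_zero[OF p] by simp
    next
      case False
      have cl: "pa_mult a (pbasis q) \<in> kQ_carrier"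
        using ac q by (simp add: pa_mult_closed pbasis_closed)
      have short: "a (mk l m False) = 0" if "m < 6*p+1" for m l
        using a that by (auto simp: Jset_def)
      have val: "pa_mult a (pbasis q) (mk l n r) =
                 (if r = r0 \<and> n0 \<le> n then a (mk l (n - n0) False) else 0)" for l n r
        using qe False by (simp add: pa_mult_mk_right)
      have z: "pa_mult a (pbasis q) (mk l n r) = 0" if "n < 6*p+1" for l n r
        using val[of l n r] short[of "n - n0" l] that by auto
      have t1: "pa_mult a (pbasis q) (Triv V1) = 0" "pa_mult a (pbasis q) (Triv V3) = 0"
        using qe False by (simp_all add: pa_mult_mk_right)
      show ?thesis
        unfolding Jset_def using cl t1 z by (auto intro!: Vc_zero[OF p])
    qed
  qed
qed

lemma J_ideal: "p > 0 \<Longrightarrow> ideal (Jset p :: (qpath \<Rightarrow> 'k::field) set) kQ"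
proof -
  assume p: "p > 0"
  show ?thesis
  proof (rule idealI[OF ring_kQ])
    show "subgroup (Jset p) (add_monoid (kQ :: (qpath \<Rightarrow> 'k::field) ring))"
      by (rule kQ_subgroup) (auto simp: J_carrier J_zero[OF p] J_add J_neg)
  next
    fix a x assume a: "a \<in> (Jset p :: (qpath \<Rightarrow> 'k::field) set)"
      and x: "x \<in> carrier (kQ :: (qpath \<Rightarrow> 'k::field) ring)"
    have "pa_mult x a \<in> Jset p"
    proof (rule carrier_induct[of x "\<lambda>x. pa_mult x a \<in> Jset p"])
      show "x \<in> kQ_carrier" using x by simp
      show "pa_mult (\<lambda>_. 0) a \<in> Jset p" by (simp add: pa_mult_zero_left J_zero[OF p])
    next
      fix y q c assume "pa_mult y a \<in> Jset p" "valid_path q"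
      then show "pa_mult (pa_add y (pa_smult c (pbasis q))) a \<in> Jset p"
        by (simp add: pa_mult_add_left pa_mult_smult_left J_add J_smult J_left_basis[OF p a])
    qed
    then show "x \<otimes>\<^bsub>kQ\<^esub> a \<in> Jset p" by simp
    have "pa_mult a x \<in> Jset p"
    proof (rule carrier_induct[of x "\<lambda>x. pa_mult a x \<in> Jset p"])
      show "x \<in> kQ_carrier" using x by simp
      show "pa_mult a (\<lambda>_. 0) \<in> Jset p" by (simp add: pa_mult_zero_right J_zero[OF p])
    next
      fix y q c assume "pa_mult a y \<in> Jset p" "valid_path q"
      then show "pa_mult a (pa_add y (pa_smult c (pbasis q))) \<in> Jset p"
        by (simp add: pa_mult_add_right pa_mult_smult_right J_add J_smult J_right_basis[OF p a])
    qed
    then show "a \<otimes>\<^bsub>kQ\<^esub> x \<in> Jset p" by simp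
  qed
qed

lemma betapow_mk: "n > 0 \<Longrightarrow> betapow n = pbasis (mk False n False)"
  by (simp add: betapow_def mk_def mkl_def)

lemma abg_mk: "alpha_beta_gamma n = pbasis (mk True n True)"
  by (simp add: alpha_beta_gamma_def mk_def mkl_def)

lemma pbasis_mk_val: "pbasis (mk l n r) (mk l' n' r') = (if l' = l \<and> n' = n \<and> r' = r then 1 else 0)"
  by (auto simp: pbasis_def)

lemma pbasis_mk_Triv: "pbasis (mk l n r) (Triv V1) = 0" "pbasis (mk l n r) (Triv V3) = 0"
  by (auto simp: pbasis_def mk_def)

lemma betapow_N: "betapow (6*p+1) = pbasis (mk False (6*p+1) False)"
  by (rule betapow_mk) simp

lemma gens_carrier: "Igens p \<subseteq> kQ_carrier"
  unfolding Igens_def betapow_N abg_mk by (auto simp: pbasis_closed valid_mk pa_add_closed simp del: One_nat_def)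

lemma gens_J: "p > 0 \<Longrightarrow> (Igens p :: (qpath \<Rightarrow> 'k::field) set) \<subseteq> Jset p"
proof -
  assume p: "p > 0"
  have b: "betapow (6*p+1) \<in> (Jset p :: (qpath \<Rightarrow> 'k::field) set)"
    unfolding betapow_N Jset_def
    by (auto simp: pbasis_closed valid_mk pbasis_mk_val pbasis_mk_Triv intro!: Vc_zero[OF p])
  have g: "alpha_beta_gamma n \<in> (Jset p :: (qpath \<Rightarrow> 'k::field) set)" if "n = 0 \<or> n = 2*p+1" for n
    unfolding abg_mk Jset_def using that p
    by (auto simp: pbasis_closed valid_mk pbasis_mk_val pbasis_mk_Triv Vc_def)
  have hc: "pa_add (pbasis (mk True 1 True)) (pbasis (mk True 2 True)) \<in> (kQ_carrier :: (qpath \<Rightarrow> 'k::field) set)"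
    by (simp add: pa_add_closed pbasis_closed valid_mk)
  have h: "pa_add (alpha_beta_gamma 1) (alpha_beta_gamma 2) \<in> (Jset p :: (qpath \<Rightarrow> 'k::field) set)"
    unfolding abg_mk Jset_def using p hc
    by (auto simp: pbasis_closed valid_mk pbasis_mk_val pbasis_mk_Triv Vc_def pa_add_def pa_add_closed)
  show ?thesis unfolding Igens_def using b g h by auto
qed

lemma I_ideal: "ideal (Iideal p :: (qpath \<Rightarrow> 'k::field) set) kQ"
proof -
  interpret ring "kQ :: (qpath \<Rightarrow> 'k::field) ring" by (rule ring_kQ)
  show ?thesis unfolding Iideal_def by (rule genideal_ideal) (use gens_carrier in simp)
qed

lemma gens_I: "(Igens p :: (qpath \<Rightarrow> 'k::field) set) \<subseteq> Iideal p"
proof -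
  interpret ring "kQ :: (qpath \<Rightarrow> 'k::field) ring" by (rule ring_kQ)
  show ?thesis unfolding Iideal_def by (rule genideal_self) (use gens_carrier in simp)
qed

lemma I_J: "p > 0 \<Longrightarrow> (Iideal p :: (qpath \<Rightarrow> 'k::field) set) \<subseteq> Jset p"
proof -
  assume p: "p > 0"
  interpret ring "kQ :: (qpath \<Rightarrow> 'k::field) ring" by (rule ring_kQ)
  show ?thesis unfolding Iideal_def by (rule genideal_minimal[OF J_ideal[OF p] gens_J[OF p]])
qed

lemma plen_mk: "plen (mk l n r) = (if l then 1 else 0) + n + (if r then 1 else 0)"
  by (auto simp: mk_def mkl_def)

lemma J_R2: "p > 0 \<Longrightarrow> Jset p \<subseteq> arrow_ideal_pow 2"
proof
  fix a assume p: "p > 0" and a: "a \<in> Jset p"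
  have "2 \<le> plen q" if "a q \<noteq> 0" for q
  proof -
    have "valid_path q" using a that by (auto simp: Jset_def kQ_carrier_def)
    then show ?thesis
    proof (rule valid_path_cases)
      assume "q = Triv V1" then show ?thesis using a that by (auto simp: Jset_def)
    next
      assume "q = Triv V3" then show ?thesis using a that by (auto simp: Jset_def)
    next
      fix l n r assume qe: "q = mk l n r"
      have "\<not> (n < 6*p+1 \<and> \<not> (l \<and> r))" using a that qe by (auto simp: Jset_def)
      then show ?thesis using qe p by (auto simp: plen_mk)
    qed
  qed
  then show "a \<in> arrow_ideal_pow 2" using a by (auto simp: arrow_ideal_pow_def Jset_def)
qed

lemma pbasis_long_in_I:
  assumes "n \<ge> 6*p+1"
  shows "pbasis (mk l n r) \<in> (Iideal p :: (qpath \<Rightarrow> 'k::field) set)"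
proof -
  interpret ideal "Iideal p :: (qpath \<Rightarrow> 'k::field) set" kQ by (rule I_ideal)
  define N where "N = 6*p+1"
  have bI: "pbasis (mk False N False) \<in> (Iideal p :: (qpath \<Rightarrow> 'k::field) set)"
    using gens_I[of p] unfolding Igens_def betapow_N N_def by blast
  have "pa_mult (pbasis (mk False N False)) (pbasis (mk False (n - N) r)) = (pbasis (mk False n r) :: qpath \<Rightarrow> 'k)"
    unfolding pbasis_mk[of False "n - N" r] pbasis_mk[of False n r]
    using assms by (simp add: poly_mult_mk_left sh_delta N_def)
  moreover have "pa_mult (pbasis (mk l 0 False)) (pbasis (mk False n r)) = (pbasis (mk l n r) :: qpath \<Rightarrow> 'k)"
    unfolding pbasis_mk[of False n r] pbasis_mk[of l n r] by (simp add: poly_mult_mk_left)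
  moreover have "pa_mult (pbasis (mk False N False)) (pbasis (mk False (n - N) r)) \<in> (Iideal p :: (qpath \<Rightarrow> 'k::field) set)"
    using I_r_closed[OF bI, of "pbasis (mk False (n - N) r)"] by (simp add: pbasis_closed valid_mk)
  ultimately have "pbasis (mk False n r) \<in> (Iideal p :: (qpath \<Rightarrow> 'k::field) set)" by simp
  then have "pa_mult (pbasis (mk l 0 False)) (pbasis (mk False n r)) \<in> (Iideal p :: (qpath \<Rightarrow> 'k::field) set)"
    using I_l_closed[of "pbasis (mk False n r)" "pbasis (mk l 0 False)"] by (simp add: pbasis_closed valid_mk)
  then show ?thesis
    using \<open>pa_mult (pbasis (mk l 0 False)) (pbasis (mk False n r)) = pbasis (mk l n r)\<close> by simp
qed

lemma Rm_I: "arrow_ideal_pow (6*p+3) \<subseteq> (Iideal p :: (qpath \<Rightarrow> 'k::field) set)"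
proof
  fix a :: "qpath \<Rightarrow> 'k" assume a: "a \<in> arrow_ideal_pow (6*p+3)"
  show "a \<in> Iideal p"
  proof (rule span_in_ideal[OF I_ideal])
    show "a \<in> kQ_carrier" using a by (simp add: arrow_ideal_pow_def)
    fix q assume aq: "a q \<noteq> 0"
    then have v: "valid_path q" and len: "6*p+3 \<le> plen q"
      using a by (auto simp: arrow_ideal_pow_def kQ_carrier_def)
    from v show "pbasis q \<in> Iideal p"
    proof (rule valid_path_cases)
      assume "q = Triv V1" then show ?thesis using len by simp
    next
      assume "q = Triv V3" then show ?thesis using len by simp
    next
      fix l n r assume qe: "q = mk l n r"
      then have "n \<ge> 6*p+1" using len by (auto simp: plen_mk split: if_splits)
      then show ?thesis using qe pbasis_long_in_I by blast
    qed
  qed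
qed

lemma admissible_I: "p > 0 \<Longrightarrow> admissible (Iideal p :: (qpath \<Rightarrow> 'k::field) set)"
proof -
  assume p: "p > 0"
  have "(Iideal p :: (qpath \<Rightarrow> 'k::field) set) \<subseteq> arrow_ideal_pow 2"
    using I_J[OF p] J_R2[OF p] by (rule order_trans)
  moreover have "\<exists>m\<ge>2. arrow_ideal_pow m \<subseteq> (Iideal p :: (qpath \<Rightarrow> 'k::field) set)"
    by (rule exI[of _ "6*p+3"]) (simp add: Rm_I)
  ultimately show ?thesis unfolding admissible_def using I_ideal by blast
qed

section \<open>Abstract derivation lemmas\<close>

definition isD :: "('a, 'm) ring_scheme \<Rightarrow> ('a \<Rightarrow> 'a) \<Rightarrow> bool" where
  "isD R D \<longleftrightarrow> (\<forall>x\<in>carrier R. D x \<in> carrier R) \<and>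
     (\<forall>x\<in>carrier R. \<forall>y\<in>carrier R. D (x \<oplus>\<^bsub>R\<^esub> y) = D x \<oplus>\<^bsub>R\<^esub> D y) \<and>
     (\<forall>x\<in>carrier R. \<forall>y\<in>carrier R. D (x \<otimes>\<^bsub>R\<^esub> y) = (D x \<otimes>\<^bsub>R\<^esub> y) \<oplus>\<^bsub>R\<^esub> (x \<otimes>\<^bsub>R\<^esub> D y))"

context ring
begin

lemma isD_closed: "isD R D \<Longrightarrow> x \<in> carrier R \<Longrightarrow> D x \<in> carrier R"
  by (simp add: isD_def)
lemma isD_add: "isD R D \<Longrightarrow> x \<in> carrier R \<Longrightarrow> y \<in> carrier R \<Longrightarrow> D (x \<oplus> y) = D x \<oplus> D y"
  by (simp add: isD_def)
lemma isD_mult: "isD R D \<Longrightarrow> x \<in> carrier R \<Longrightarrow> y \<in> carrier R \<Longrightarrow> D (x \<otimes> y) = D x \<otimes> y \<oplus> x \<otimes> D y"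
  by (simp add: isD_def)

lemma isD_zero: "isD R D \<Longrightarrow> D \<zero> = \<zero>"
proof -
  assume d: "isD R D"
  have "D \<zero> = D (\<zero> \<oplus> \<zero>)" by simp
  also have "\<dots> = D \<zero> \<oplus> D \<zero>" by (rule isD_add[OF d]) simp_all
  finally have "D \<zero> \<oplus> D \<zero> = \<zero> \<oplus> D \<zero>" using isD_closed[OF d, of \<zero>] by simp
  then show ?thesis using isD_closed[OF d, of \<zero>] by (meson add.right_cancel zero_closed)
qed

lemma ad_leibniz: "x \<in> carrier R \<Longrightarrow> y \<in> carrier R \<Longrightarrow> z \<in> carrier R \<Longrightarrow>
  y \<otimes> (x \<otimes> z) \<ominus> (x \<otimes> z) \<otimes> y = (y \<otimes> x \<ominus> x \<otimes> y) \<otimes> z \<oplus> x \<otimes> (y \<otimes> z \<ominus> z \<otimes> y)"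
  by (simp add: ring_simprules r_distr l_distr minus_eq l_minus r_minus m_assoc a_ac)

lemma ad_add: "x \<in> carrier R \<Longrightarrow> y \<in> carrier R \<Longrightarrow> z \<in> carrier R \<Longrightarrow>
  y \<otimes> (x \<oplus> z) \<ominus> (x \<oplus> z) \<otimes> y = (y \<otimes> x \<ominus> x \<otimes> y) \<oplus> (y \<otimes> z \<ominus> z \<otimes> y)"
  by (simp add: ring_simprules r_distr l_distr minus_eq minus_add a_ac)

lemma isD_ad: "y \<in> carrier R \<Longrightarrow> isD R (\<lambda>x. y \<otimes> x \<ominus> x \<otimes> y)"
  unfolding isD_def using ad_leibniz ad_add by simp

lemma diff_add4: "a \<in> carrier R \<Longrightarrow> b \<in> carrier R \<Longrightarrow> c \<in> carrier R \<Longrightarrow> d \<in> carrier R \<Longrightarrow>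
  (a \<oplus> b) \<ominus> (c \<oplus> d) = (a \<ominus> c) \<oplus> (b \<ominus> d)"
  by (simp add: ring_simprules minus_eq minus_add a_ac)

lemma leib_diff: "a \<in> carrier R \<Longrightarrow> b \<in> carrier R \<Longrightarrow> c \<in> carrier R \<Longrightarrow> d \<in> carrier R \<Longrightarrow>
  x \<in> carrier R \<Longrightarrow> y \<in> carrier R \<Longrightarrow>
  (a \<otimes> y \<oplus> x \<otimes> b) \<ominus> (c \<otimes> y \<oplus> x \<otimes> d) = (a \<ominus> c) \<otimes> y \<oplus> x \<otimes> (b \<ominus> d)"
  by (simp add: ring_simprules minus_eq minus_add a_ac l_distr r_distr l_minus r_minus)

lemma isD_diff: "isD R D \<Longrightarrow> isD R E \<Longrightarrow> isD R (\<lambda>x. D x \<ominus> E x)"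
  unfolding isD_def using diff_add4 leib_diff by simp

lemma cancel_right_zero: "a \<in> carrier R \<Longrightarrow> b \<in> carrier R \<Longrightarrow> a = b \<oplus> a \<Longrightarrow> b = \<zero>"
proof -
  assume ab: "a \<in> carrier R" "b \<in> carrier R" and h: "a = b \<oplus> a"
  have "b = (b \<oplus> a) \<oplus> \<ominus> a" using ab by (simp add: a_assoc r_neg)
  also have "\<dots> = a \<oplus> \<ominus> a" using h by simp
  also have "\<dots> = \<zero>" using ab by (simp add: r_neg)
  finally show ?thesis .
qed

lemma neg_from_sum: "a \<in> carrier R \<Longrightarrow> b \<in> carrier R \<Longrightarrow> a \<oplus> b = \<zero> \<Longrightarrow> b = \<ominus> a"
proof -
  assume ab: "a \<in> carrier R" "b \<in> carrier R" and h: "a \<oplus> b = \<zero>"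
  have "b \<oplus> a = \<zero>" using h ab by (simp add: a_comm)
  then show ?thesis using ab by (simp add: minus_equality)
qed

lemma idem_normal1:
  assumes d: "isD R D"
    and c: "e1 \<in> carrier R" "e2 \<in> carrier R" "e3 \<in> carrier R"
    and i: "e1 \<otimes> e1 = e1" "e2 \<otimes> e2 = e2" "e3 \<otimes> e3 = e3"
    and o: "e1 \<otimes> e2 = \<zero>" "e1 \<otimes> e3 = \<zero>" "e2 \<otimes> e1 = \<zero>" "e2 \<otimes> e3 = \<zero>" "e3 \<otimes> e1 = \<zero>" "e3 \<otimes> e2 = \<zero>"
    and s: "e1 \<oplus> e2 \<oplus> e3 = \<one>"
  shows "D e1 = (D e1 \<otimes> e1 \<oplus> D e2 \<otimes> e2 \<oplus> D e3 \<otimes> e3) \<otimes> e1 \<ominus> e1 \<otimes> (D e1 \<otimes> e1 \<oplus> D e2 \<otimes> e2 \<oplus> D e3 \<otimes> e3)"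
proof -
  define d1 where "d1 = D e1"
  define d2 where "d2 = D e2"
  define d3 where "d3 = D e3"
  have dc: "d1 \<in> carrier R" "d2 \<in> carrier R" "d3 \<in> carrier R"
    using c isD_closed[OF d] by (auto simp: d1_def d2_def d3_def)
  have h11: "d1 = d1 \<otimes> e1 \<oplus> e1 \<otimes> d1"
    using isD_mult[OF d c(1) c(1)] i(1) by (simp add: d1_def)
  have h12: "d1 \<otimes> e2 \<oplus> e1 \<otimes> d2 = \<zero>"
    using isD_mult[OF d c(1) c(2)] o(1) isD_zero[OF d] by (simp add: d1_def d2_def)
  have h13: "d1 \<otimes> e3 \<oplus> e1 \<otimes> d3 = \<zero>"
    using isD_mult[OF d c(1) c(3)] o(2) isD_zero[OF d] by (simp add: d1_def d3_def)
  have e12: "e1 \<otimes> d2 = \<ominus> (d1 \<otimes> e2)"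
    by (rule neg_from_sum[OF _ _ h12]) (use dc c in simp_all)
  have e13: "e1 \<otimes> d3 = \<ominus> (d1 \<otimes> e3)"
    by (rule neg_from_sum[OF _ _ h13]) (use dc c in simp_all)
  have "e1 \<otimes> d1 = e1 \<otimes> d1 \<otimes> e1 \<oplus> e1 \<otimes> d1"
  proof -
    have "e1 \<otimes> d1 = e1 \<otimes> (d1 \<otimes> e1 \<oplus> e1 \<otimes> d1)" using h11 by simp
    also have "\<dots> = e1 \<otimes> d1 \<otimes> e1 \<oplus> e1 \<otimes> e1 \<otimes> d1"
      using dc c by (simp add: r_distr m_assoc)
    finally show ?thesis using i(1) by simp
  qed
  then have e1d1e1: "e1 \<otimes> d1 \<otimes> e1 = \<zero>"
    by (rule cancel_right_zero[rotated 2]) (use dc c in simp_all)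
  have y0e1: "(d1 \<otimes> e1 \<oplus> d2 \<otimes> e2 \<oplus> d3 \<otimes> e3) \<otimes> e1 = d1 \<otimes> e1"
    using dc c by (simp add: l_distr m_assoc i o)
  have "e1 \<otimes> (d1 \<otimes> e1 \<oplus> d2 \<otimes> e2 \<oplus> d3 \<otimes> e3) = e1 \<otimes> d1 \<otimes> e1 \<oplus> e1 \<otimes> d2 \<otimes> e2 \<oplus> e1 \<otimes> d3 \<otimes> e3"
    using dc c by (simp add: r_distr m_assoc)
  also have "\<dots> = \<ominus> (d1 \<otimes> e2) \<otimes> e2 \<oplus> \<ominus> (d1 \<otimes> e3) \<otimes> e3"
    using dc c by (simp add: e1d1e1 e12 e13)
  also have "\<dots> = \<ominus> (d1 \<otimes> e2) \<oplus> \<ominus> (d1 \<otimes> e3)"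
    using dc c by (simp add: l_minus m_assoc i)
  also have "\<dots> = \<ominus> (d1 \<otimes> (e2 \<oplus> e3))"
    using dc c by (simp add: r_distr minus_add)
  also have "e2 \<oplus> e3 = \<one> \<oplus> \<ominus> e1"
  proof -
    have "\<one> \<oplus> \<ominus> e1 = (e1 \<oplus> e2 \<oplus> e3) \<oplus> \<ominus> e1" using s by simp
    also have "\<dots> = (e2 \<oplus> e3) \<oplus> (e1 \<oplus> \<ominus> e1)" using c by (simp add: a_ac)
    also have "\<dots> = e2 \<oplus> e3" using c by (simp add: r_neg)
    finally show ?thesis by simp
  qed
  also have "\<ominus> (d1 \<otimes> (\<one> \<oplus> \<ominus> e1)) = \<ominus> d1 \<oplus> d1 \<otimes> e1"
    using dc c by (simp add: r_distr r_minus minus_add minus_minus)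
  finally have e1y0: "e1 \<otimes> (d1 \<otimes> e1 \<oplus> d2 \<otimes> e2 \<oplus> d3 \<otimes> e3) = \<ominus> d1 \<oplus> d1 \<otimes> e1" .
  have fin: "d1 \<otimes> e1 \<ominus> (\<ominus> d1 \<oplus> d1 \<otimes> e1) = d1"
  proof -
    have "d1 \<otimes> e1 \<ominus> (\<ominus> d1 \<oplus> d1 \<otimes> e1) = d1 \<otimes> e1 \<oplus> (d1 \<oplus> \<ominus> (d1 \<otimes> e1))"
      using dc c by (simp add: minus_eq minus_add minus_minus a_comm)
    also have "\<dots> = d1 \<oplus> (d1 \<otimes> e1 \<oplus> \<ominus> (d1 \<otimes> e1))"
      using dc c by (simp add: a_lcomm)
    also have "\<dots> = d1" using dc c by (simp add: r_neg)
    finally show ?thesis .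
  qed
  show ?thesis
    unfolding d1_def[symmetric] d2_def[symmetric] d3_def[symmetric] y0e1 e1y0 fin ..
qed

end

lemma VcD: "Vc p f \<Longrightarrow> i < 6*p+1 \<Longrightarrow> i \<noteq> 0 \<Longrightarrow> i \<noteq> 1 \<Longrightarrow> i \<noteq> 2 \<Longrightarrow> i \<noteq> 2*p+1 \<Longrightarrow> f i = 0"
  by (simp add: Vc_def)
lemma VcD2: "Vc p f \<Longrightarrow> f 1 = f 2"
  by (simp add: Vc_def)

lemma linalg:
  fixes s g :: "nat \<Rightarrow> 'k::field"
  assumes p2: "p \<ge> 2"
    and g0: "g 0 = 0" and vs: "Vc p s"
    and v2: "Vc p (\<lambda>m. sh 1 s m + g m + sh 2 s m + 2 * sh 1 g m)"
    and v3: "Vc p (\<lambda>m. sh (2*p+1) s m + sh (2*p) g m)"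
  shows "\<forall>i<6*p+1. g i = 0" and "\<forall>i. 1 \<le> i \<and> i < 6*p+1 \<longrightarrow> s i = 0"
proof -
  define N where "N = 6*p+1"
  have grel: "g i = - s (i - 1)" if "2 \<le> i" "i \<le> 4*p" for i
  proof -
    have "sh (2*p+1) s (2*p+i) + sh (2*p) g (2*p+i) = 0"
      by (rule VcD[OF v3]) (use that p2 in auto)
    moreover have "sh (2*p+1) s (2*p+i) = s (i - 1)" "sh (2*p) g (2*p+i) = g i"
      using that by (auto simp: sh_def)
    ultimately show ?thesis by (simp add: eq_neg_iff_add_eq_0 add.commute)
  qed
  have s0: "s i = 0" if "i < N" "i \<noteq> 0" "i \<noteq> 1" "i \<noteq> 2" "i \<noteq> 2*p+1" for i
    using VcD[OF vs, of i] that by (simp add: N_def)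
  have s12: "s 1 = s 2" by (rule VcD2[OF vs])
  have w12: "s 0 + g 1 = s 1 + g 2 + s 0 + 2 * g 1"
    using VcD2[OF v2] g0 by (simp add: sh_def numeral_2_eq_2)
  have g2: "g 2 = - s 1" using grel[of 2] p2 by simp
  have g3: "g 3 = - s 2" using grel[of 3] p2 by simp
  have two: "(2::'k) \<noteq> 1"
    by (metis one_add_one add_cancel_right_right one_neq_zero)
  have g1: "g 1 = 0"
  proof -
    have "s 0 + g 1 = s 0 + g 1 + g 1" using w12 g2 by (simp add: algebra_simps)
    then show ?thesis using two by simp
  qed
  have "s 2 + g 3 + s 1 + 2 * g 2 = 0"
  proof -
    have "sh 1 s 3 + g 3 + sh 2 s 3 + 2 * sh 1 g 3 = 0"
      by (rule VcD[OF v2]) (use p2 in auto)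
    then show ?thesis by (simp add: sh_def numeral_3_eq_3 numeral_2_eq_2)
  qed
  then have s1: "s 1 = 0" using g2 g3 s12 by (simp add: algebra_simps)
  have s2: "s 2 = 0" using s1 s12 by simp
  have "s (2*p+2) + g (2*p+3) + s (2*p+1) + 2 * g (2*p+2) = 0"
  proof -
    have "sh 1 s (2*p+3) + g (2*p+3) + sh 2 s (2*p+3) + 2 * sh 1 g (2*p+3) = 0"
      by (rule VcD[OF v2]) (use p2 in auto)
    moreover have "sh 1 s (2*p+3) = s (2*p+2)" "sh 2 s (2*p+3) = s (2*p+1)" "sh 1 g (2*p+3) = g (2*p+2)"
      by (auto simp: sh_def)
    ultimately show ?thesis by simp
  qed
  moreover have "s (2*p+2) = 0" by (rule s0) (use p2 in \<open>auto simp: N_def\<close>)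
  moreover have "g (2*p+3) = 0"
    using grel[of "2*p+3"] p2 \<open>s (2*p+2) = 0\<close> by simp
  moreover have "g (2*p+2) = - s (2*p+1)"
    using grel[of "2*p+2"] p2 by simp
  ultimately have su: "s (2*p+1) = 0" by (simp add: algebra_simps)
  have sall: "s i = 0" if "1 \<le> i" "i < N" for i
    using s0[of i] s1 s2 su that by (cases "i = 1 \<or> i = 2 \<or> i = 2*p+1") auto
  have glow: "g i = 0" if "i \<le> 4*p" for i
  proof (cases "i \<le> 1")
    case True then show ?thesis using g0 g1 by (cases i) auto
  next
    case False
    then have "g i = - s (i - 1)" using grel[of i] that by simp
    also have "s (i - 1) = 0" using sall[of "i - 1"] False that by (simp add: N_def)
    finally show ?thesis by simp
  qed
  have ghigh: "g (4*p + k) = 0" if "4*p + k < N" for k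
    using that
  proof (induction k)
    case 0 then show ?case using glow by simp
  next
    case (Suc k)
    define i where "i = 4*p + Suc k"
    have "sh 1 s i + g i + sh 2 s i + 2 * sh 1 g i = 0"
      by (rule VcD[OF v2]) (use Suc.prems p2 in \<open>auto simp: i_def N_def\<close>)
    moreover have "sh 1 s i = 0" "sh 2 s i = 0"
      using sall[of "i - 1"] sall[of "i - 2"] Suc.prems p2 by (auto simp: sh_def i_def)
    moreover have "sh 1 g i = g (4*p + k)" by (simp add: sh_def i_def)
    moreover have "g (4*p + k) = 0" using Suc by simp
    ultimately show ?case by (simp add: i_def)
  qed
  show "\<forall>i<6*p+1. g i = 0"
  proof (intro allI impI)
    fix i assume "i < 6*p+1"
    show "g i = 0"
    proof (cases "i \<le> 4*p")
      case True then show ?thesis by (rule glow)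
    next
      case False
      then obtain k where "i = 4*p + k" by (metis le_add_diff_inverse nat_le_linear)
      then show ?thesis using ghigh[of k] \<open>i < 6*p+1\<close> by (simp add: N_def)
    qed
  qed
  show "\<forall>i. 1 \<le> i \<and> i < 6*p+1 \<longrightarrow> s i = 0" using sall by (simp add: N_def)
qed

locale QS =
  fixes p :: nat and D :: "(qpath \<Rightarrow> 'k::field) set \<Rightarrow> (qpath \<Rightarrow> 'k) set"
  assumes ppos: "p > 0" and charp: "CHAR('k) = p"
    and der: "is_derivation (Lambda p) (Lscalar p) D"
begin

abbreviation I :: "(qpath \<Rightarrow> 'k) set" where "I \<equiv> Iideal p"
abbreviation A :: "(qpath \<Rightarrow> 'k) set ring" where "A \<equiv> Lambda p"

definition pr :: "(qpath \<Rightarrow> 'k) \<Rightarrow> (qpath \<Rightarrow> 'k) set" where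
  "pr x = I +>\<^bsub>kQ\<^esub> x"

lemma idl: "ideal I kQ" by (rule I_ideal)

lemma ringA: "ring A"
  unfolding Lambda_def by (rule ideal.quotient_is_ring[OF idl])

lemma homA: "ring_hom_ring kQ A pr"
proof -
  have "pr = (+>\<^bsub>kQ\<^esub>) I" by (rule ext) (simp add: pr_def)
  then show ?thesis unfolding Lambda_def using ideal.rcos_ring_hom_ring[OF idl] by simp
qed

sublocale RA: ring A by (rule ringA)
sublocale H: ring_hom_ring kQ A pr by (rule homA)

lemma pr_closed: "x \<in> kQ_carrier \<Longrightarrow> pr x \<in> carrier A"
  using H.hom_closed by simp
lemma pr_mult: "x \<in> kQ_carrier \<Longrightarrow> y \<in> kQ_carrier \<Longrightarrow> pr (pa_mult x y) = pr x \<otimes>\<^bsub>A\<^esub> pr y"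
  using H.hom_mult by simp
lemma pr_add: "x \<in> kQ_carrier \<Longrightarrow> y \<in> kQ_carrier \<Longrightarrow> pr (pa_add x y) = pr x \<oplus>\<^bsub>A\<^esub> pr y"
  using H.hom_add by simp
lemma pr_one: "pr pa_one = \<one>\<^bsub>A\<^esub>"
  using H.hom_one by simp
lemma pr_zero: "pr (\<lambda>_. 0) = \<zero>\<^bsub>A\<^esub>"
  using H.hom_zero by simp

lemma zeroA: "\<zero>\<^bsub>A\<^esub> = I"
  by (simp add: Lambda_def FactRing_def)

lemma pr_zero_iff: "x \<in> kQ_carrier \<Longrightarrow> pr x = \<zero>\<^bsub>A\<^esub> \<longleftrightarrow> x \<in> I"
proof
  assume x: "x \<in> kQ_carrier" and h: "pr x = \<zero>\<^bsub>A\<^esub>"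
  then show "x \<in> I"
    using ideal.rcos_const_imp_mem[OF idl, of x] by (simp add: pr_def zeroA)
next
  assume x: "x \<in> kQ_carrier" and h: "x \<in> I"
  interpret ideal I kQ by (rule idl)
  have "I +>\<^bsub>kQ\<^esub> x = I"
    by (rule abelian_group.a_coset_join2[OF ring.is_abelian_group[OF ring_kQ]])
       (use x h additive_subgroup.a_subgroup[OF is_additive_subgroup] in simp_all)
  then show "pr x = \<zero>\<^bsub>A\<^esub>" by (simp add: pr_def zeroA)
qed

lemma pr_surj: "a \<in> carrier A \<Longrightarrow> \<exists>x\<in>kQ_carrier. a = pr x"
  by (auto simp: Lambda_def FactRing_def A_RCOSETS_def RCOSETS_def a_r_coset_def pr_def)

lemma pr_neg: "x \<in> kQ_carrier \<Longrightarrow> pr (\<lambda>q. - x q) = \<ominus>\<^bsub>A\<^esub> pr x"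
  using H.hom_a_inv[of x] kQ_a_inv[of x] by simp

lemma pr_diff: "x \<in> kQ_carrier \<Longrightarrow> y \<in> kQ_carrier \<Longrightarrow> pr (pa_add x (\<lambda>q. - y q)) = pr x \<ominus>\<^bsub>A\<^esub> pr y"
  by (simp add: pr_add neg_closed pr_neg RA.minus_eq)

lemma pr_eqI: "x \<in> kQ_carrier \<Longrightarrow> y \<in> kQ_carrier \<Longrightarrow> pa_add x (\<lambda>q. - y q) \<in> I \<Longrightarrow> pr x = pr y"
proof -
  assume x: "x \<in> kQ_carrier" and y: "y \<in> kQ_carrier" and h: "pa_add x (\<lambda>q. - y q) \<in> I"
  have "pr x \<ominus>\<^bsub>A\<^esub> pr y = \<zero>\<^bsub>A\<^esub>"
    using pr_diff[OF x y] pr_zero_iff[of "pa_add x (\<lambda>q. - y q)"] h x y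
    by (simp add: pa_add_closed neg_closed)
  then show ?thesis using pr_closed[OF x] pr_closed[OF y] RA.r_neg1
    by (metis RA.add.inv_closed RA.add.m_closed RA.add.m_lcomm RA.minus_eq RA.r_neg RA.r_zero)
qed

definition sc :: "'k \<Rightarrow> (qpath \<Rightarrow> 'k) set" where "sc = Lscalar p"

lemma sc_pr: "sc c = pr (pa_smult c pa_one)"
  by (simp add: sc_def Lscalar_def pr_def)

lemma sc_closed: "sc c \<in> carrier A"
  by (simp add: sc_pr pr_closed smult_closed pa_one_closed)

lemma pr_smult: "x \<in> kQ_carrier \<Longrightarrow> pr (pa_smult c x) = sc c \<otimes>\<^bsub>A\<^esub> pr x"
  by (simp add: sc_pr pr_mult[symmetric] smult_closed pa_one_closed smult_one_mult)

lemma sc_comm: "a \<in> carrier A \<Longrightarrow> sc c \<otimes>\<^bsub>A\<^esub> a = a \<otimes>\<^bsub>A\<^esub> sc c"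
proof -
  assume "a \<in> carrier A"
  then obtain x where x: "x \<in> kQ_carrier" "a = pr x" using pr_surj by blast
  have "pa_mult x (pa_smult c pa_one) = pa_smult c x"
    using x by (simp add: pa_mult_smult_right pa_mult_one)
  then show ?thesis using x
    by (simp add: sc_pr pr_mult[symmetric] smult_closed pa_one_closed smult_one_mult)
qed

lemma isD_D: "isD A D"
  using der by (simp add: is_derivation_def isD_def Pi_def)

lemma D_sc: "a \<in> carrier A \<Longrightarrow> D (sc c \<otimes>\<^bsub>A\<^esub> a) = sc c \<otimes>\<^bsub>A\<^esub> D a"
  using der by (simp add: is_derivation_def sc_def)

end

context ring
begin

lemma isD_corner:
  assumes d: "isD R D1" and "D1 ea = \<zero>" "D1 eb = \<zero>"
    and c: "ea \<in> carrier R" "g \<in> carrier R" "eb \<in> carrier R"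
    and g: "g = ea \<otimes> g \<otimes> eb"
  shows "D1 g = ea \<otimes> D1 g \<otimes> eb"
proof -
  have dg: "D1 g \<in> carrier R" using isD_closed[OF d c(2)] .
  have da: "D1 ea \<in> carrier R" using isD_closed[OF d c(1)] .
  have "D1 g = D1 (ea \<otimes> g \<otimes> eb)" using g by simp
  also have "\<dots> = D1 (ea \<otimes> g) \<otimes> eb \<oplus> (ea \<otimes> g) \<otimes> D1 eb"
    using c by (simp add: isD_mult[OF d])
  also have "\<dots> = (D1 ea \<otimes> g \<oplus> ea \<otimes> D1 g) \<otimes> eb"
    using c assms(3) da dg by (simp add: isD_mult[OF d])
  also have "\<dots> = ea \<otimes> D1 g \<otimes> eb"
    using c dg assms(2) by simp
  finally show ?thesis .
qed

lemma isD_mult3: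
  assumes d: "isD R D1" and c: "x \<in> carrier R" "y \<in> carrier R" "z \<in> carrier R"
  shows "D1 (x \<otimes> y \<otimes> z) = D1 x \<otimes> y \<otimes> z \<oplus> x \<otimes> D1 y \<otimes> z \<oplus> x \<otimes> y \<otimes> D1 z"
proof -
  have dc: "D1 x \<in> carrier R" "D1 y \<in> carrier R" "D1 z \<in> carrier R"
    using c isD_closed[OF d] by auto
  have "D1 (x \<otimes> y \<otimes> z) = D1 (x \<otimes> y) \<otimes> z \<oplus> x \<otimes> y \<otimes> D1 z"
    using c by (simp add: isD_mult[OF d])
  also have "\<dots> = (D1 x \<otimes> y \<oplus> x \<otimes> D1 y) \<otimes> z \<oplus> x \<otimes> y \<otimes> D1 z"
    using c by (simp add: isD_mult[OF d])
  finally show ?thesis using c dc by (simp add: l_distr)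
qed

end

lemma poly_zero: "poly l r (\<lambda>_. 0) = (\<lambda>_. 0)"
  by (rule ext) (simp add: poly_def split: option.splits)

lemma fin_coeff: "x \<in> kQ_carrier \<Longrightarrow> fin (\<lambda>n. x (mk l n r))"
proof -
  assume x: "x \<in> kQ_carrier"
  have "{n. x (mk l n r) \<noteq> 0} = (\<lambda>n. mk l n r) -` {q. x q \<noteq> 0}" by auto
  moreover have "finite ((\<lambda>n. mk l n r) -` {q. x q \<noteq> 0})"
    using x by (intro finite_vimageI) (auto simp: kQ_carrier_def inj_def)
  ultimately show ?thesis by (simp add: fin_def)
qed

lemma pbasis_mult_mk: "pa_mult (pbasis (mk l n False)) (pbasis (mk False m r)) = pbasis (mk l (n + m) r)"
  unfolding pbasis_mk[of False m r] pbasis_mk[of l "n + m" r]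
  by (simp add: poly_mult_mk_left sh_delta)

lemma poly_small_in_I:
  assumes f: "fin f" and z: "\<And>i. i < 6*p+1 \<Longrightarrow> f i = 0"
  shows "poly l r f \<in> (Iideal p :: (qpath \<Rightarrow> 'k::field) set)"
proof (rule span_in_ideal[OF I_ideal poly_closed[OF f]])
  fix q assume "poly l r f q \<noteq> 0"
  then obtain l' n r' where d: "dec q = Some (l', n, r')" and "l' = l \<and> r' = r \<and> f n \<noteq> 0"
    by (auto simp: poly_def split: option.splits if_splits)
  then have "q = mk l n r" "n \<ge> 6*p+1" using z dec_Some[OF d] by (auto simp: not_less[symmetric])
  then show "pbasis q \<in> Iideal p" using pbasis_long_in_I by blast
qed

lemma poly_in_I:
  assumes p: "p > 0" and f: "poly l r f \<in> (Iideal p :: (qpath \<Rightarrow> 'k::field) set)"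
  shows "(l \<and> r \<longrightarrow> Vc p f) \<and> (\<not> (l \<and> r) \<longrightarrow> (\<forall>n<6*p+1. f n = 0))"
proof -
  have J: "poly l r f \<in> Jset p" using I_J[OF p] f by blast
  have "f n = 0" if "\<not> (l \<and> r)" "n < 6*p+1" for n
  proof -
    have "poly l r f (mk l n r) = 0" using J that unfolding Jset_def by blast
    then show ?thesis by simp
  qed
  moreover have "l \<and> r \<longrightarrow> Vc p f" using J unfolding Jset_def by auto
  ultimately show ?thesis by blast
qed

definition ee :: "vert \<Rightarrow> qpath \<Rightarrow> 'k::field" where "ee v = pbasis (Triv v)"
definition al :: "qpath \<Rightarrow> 'k::field" where "al = pbasis (mk True 0 False)"
definition ga :: "qpath \<Rightarrow> 'k::field" where "ga = pbasis (mk False 0 True)"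
definition bb :: "nat \<Rightarrow> qpath \<Rightarrow> 'k::field" where "bb n = pbasis (mk False n False)"
definition abg :: "nat \<Rightarrow> qpath \<Rightarrow> 'k::field" where "abg n = pbasis (mk True n True)"

lemma gen_closed: "ee v \<in> kQ_carrier" "al \<in> kQ_carrier" "ga \<in> kQ_carrier" "bb n \<in> kQ_carrier" "abg n \<in> kQ_carrier"
  by (simp_all add: ee_def al_def ga_def bb_def abg_def pbasis_closed valid_mk)

lemma ee_mult: "pa_mult (ee v) (ee w) = (if v = w then ee v else (\<lambda>_. 0))"
  unfolding ee_def by (rule ext) (simp only: pa_mult_triv_left, auto simp: pbasis_def)

lemma ee2: "ee V2 = bb 0"
  by (simp add: ee_def bb_def e2_mk)

lemma pa_one_ee: "pa_one = pa_add (pa_add (ee V1) (ee V2)) (ee V3)"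
  by (simp add: pa_one_def ee_def)

lemma bb_Suc: "bb (Suc n) = pa_mult (bb n) (bb 1)"
  by (simp add: bb_def pbasis_mult_mk)

lemma abg_prod: "abg n = pa_mult (pa_mult al (bb n)) ga"
  by (simp add: abg_def al_def bb_def ga_def pbasis_mult_mk)

lemma mk_prods:
  "pbasis (mk False n False) = bb n"
  "pbasis (mk True n False) = pa_mult al (bb n)"
  "pbasis (mk False n True) = pa_mult (bb n) ga"
  "pbasis (mk True n True) = pa_mult (pa_mult al (bb n)) ga"
  by (simp_all add: al_def bb_def ga_def pbasis_mult_mk)

lemma corner_al: "(al :: qpath \<Rightarrow> 'k::field) = pa_mult (pa_mult (ee V1) al) (ee V2)"
proof -
  have "pa_mult (pa_mult (ee V1) al) (ee V2) = poly True False (\<lambda>n. (al :: qpath \<Rightarrow> 'k) (mk True n False))"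
    using corner[OF gen_closed(2), of True False] by (simp add: ee_def)
  also have "(\<lambda>n. (al :: qpath \<Rightarrow> 'k) (mk True n False)) = delta 0" by (rule ext) (simp add: al_def pbasis_mk_val delta_def)
  also have "poly True False (delta 0) = (al :: qpath \<Rightarrow> 'k)" by (simp add: al_def pbasis_mk)
  finally show ?thesis by simp
qed

lemma corner_bb1: "(bb 1 :: qpath \<Rightarrow> 'k::field) = pa_mult (pa_mult (ee V2) (bb 1)) (ee V2)"
proof -
  have "pa_mult (pa_mult (ee V2) (bb 1)) (ee V2) = poly False False (\<lambda>n. (bb 1 :: qpath \<Rightarrow> 'k) (mk False n False))"
    using corner[OF gen_closed(4)[of 1], of False False] by (simp add: ee_def)
  also have "(\<lambda>n. (bb 1 :: qpath \<Rightarrow> 'k) (mk False n False)) = delta 1" by (rule ext) (simp add: bb_def pbasis_mk_val delta_def)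
  also have "poly False False (delta 1) = (bb 1 :: qpath \<Rightarrow> 'k)" by (simp add: bb_def pbasis_mk)
  finally show ?thesis by simp
qed

lemma corner_ga: "(ga :: qpath \<Rightarrow> 'k::field) = pa_mult (pa_mult (ee V2) ga) (ee V3)"
proof -
  have "pa_mult (pa_mult (ee V2) ga) (ee V3) = poly False True (\<lambda>n. (ga :: qpath \<Rightarrow> 'k) (mk False n True))"
    using corner[OF gen_closed(3), of False True] by (simp add: ee_def)
  also have "(\<lambda>n. (ga :: qpath \<Rightarrow> 'k) (mk False n True)) = delta 0" by (rule ext) (simp add: ga_def pbasis_mk_val delta_def)
  also have "poly False True (delta 0) = (ga :: qpath \<Rightarrow> 'k)" by (simp add: ga_def pbasis_mk)
  finally show ?thesis by simp
qed

context QS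
begin

definition EE :: "vert \<Rightarrow> (qpath \<Rightarrow> 'k) set" where "EE v = pr (ee v)"
definition AL :: "(qpath \<Rightarrow> 'k) set" where "AL = pr al"
definition GA :: "(qpath \<Rightarrow> 'k) set" where "GA = pr ga"
definition BB :: "nat \<Rightarrow> (qpath \<Rightarrow> 'k) set" where "BB n = pr (bb n)"

lemma gens_A: "EE v \<in> carrier A" "AL \<in> carrier A" "GA \<in> carrier A" "BB n \<in> carrier A"
  by (simp_all add: EE_def AL_def GA_def BB_def pr_closed gen_closed)

lemma EE_mult: "EE v \<otimes>\<^bsub>A\<^esub> EE w = (if v = w then EE v else \<zero>\<^bsub>A\<^esub>)"
  by (simp add: EE_def pr_mult[symmetric] gen_closed ee_mult pr_zero)

lemma EE_sum: "EE V1 \<oplus>\<^bsub>A\<^esub> EE V2 \<oplus>\<^bsub>A\<^esub> EE V3 = \<one>\<^bsub>A\<^esub>"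
  by (simp add: EE_def pr_add[symmetric] gen_closed pa_add_closed pa_one_ee[symmetric] pr_one)

definition y0 :: "(qpath \<Rightarrow> 'k) set" where
  "y0 = D (EE V1) \<otimes>\<^bsub>A\<^esub> EE V1 \<oplus>\<^bsub>A\<^esub> D (EE V2) \<otimes>\<^bsub>A\<^esub> EE V2 \<oplus>\<^bsub>A\<^esub> D (EE V3) \<otimes>\<^bsub>A\<^esub> EE V3"

lemma D_closed: "a \<in> carrier A \<Longrightarrow> D a \<in> carrier A"
  using isD_D RA.isD_closed by blast

lemma y0_closed: "y0 \<in> carrier A"
  by (simp add: y0_def D_closed gens_A)

lemma D_EE: "D (EE v) = y0 \<otimes>\<^bsub>A\<^esub> EE v \<ominus>\<^bsub>A\<^esub> EE v \<otimes>\<^bsub>A\<^esub> y0"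
proof -
  have c: "EE V1 \<in> carrier A" "EE V2 \<in> carrier A" "EE V3 \<in> carrier A" by (simp_all add: gens_A)
  have dc: "D (EE V1) \<in> carrier A" "D (EE V2) \<in> carrier A" "D (EE V3) \<in> carrier A"
    using c D_closed by auto
  note m = EE_mult
  consider "v = V1" | "v = V2" | "v = V3" by (cases v) auto
  then show ?thesis
  proof cases
    case 1
    show ?thesis unfolding 1 y0_def
      by (rule RA.idem_normal1[OF isD_D c]) (simp_all add: m EE_sum)
  next
    case 2
    have y: "y0 = D (EE V2) \<otimes>\<^bsub>A\<^esub> EE V2 \<oplus>\<^bsub>A\<^esub> D (EE V1) \<otimes>\<^bsub>A\<^esub> EE V1 \<oplus>\<^bsub>A\<^esub> D (EE V3) \<otimes>\<^bsub>A\<^esub> EE V3"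
      unfolding y0_def using c dc by (simp add: RA.a_ac)
    have s: "EE V2 \<oplus>\<^bsub>A\<^esub> EE V1 \<oplus>\<^bsub>A\<^esub> EE V3 = \<one>\<^bsub>A\<^esub>"
      using EE_sum c by (simp add: RA.a_ac)
    show ?thesis unfolding 2 y
      by (rule RA.idem_normal1[OF isD_D c(2) c(1) c(3)]) (simp_all add: m s)
  next
    case 3
    have y: "y0 = D (EE V3) \<otimes>\<^bsub>A\<^esub> EE V3 \<oplus>\<^bsub>A\<^esub> D (EE V1) \<otimes>\<^bsub>A\<^esub> EE V1 \<oplus>\<^bsub>A\<^esub> D (EE V2) \<otimes>\<^bsub>A\<^esub> EE V2"
      unfolding y0_def using c dc by (simp add: RA.a_ac)
    have s: "EE V3 \<oplus>\<^bsub>A\<^esub> EE V1 \<oplus>\<^bsub>A\<^esub> EE V2 = \<one>\<^bsub>A\<^esub>"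
      using EE_sum c by (simp add: RA.a_ac)
    show ?thesis unfolding 3 y
      by (rule RA.idem_normal1[OF isD_D c(3) c(1) c(2)]) (simp_all add: m s)
  qed
qed

definition D1 :: "(qpath \<Rightarrow> 'k) set \<Rightarrow> (qpath \<Rightarrow> 'k) set" where
  "D1 x = D x \<ominus>\<^bsub>A\<^esub> (y0 \<otimes>\<^bsub>A\<^esub> x \<ominus>\<^bsub>A\<^esub> x \<otimes>\<^bsub>A\<^esub> y0)"

lemma isD_D1: "isD A D1"
proof -
  have "isD A (\<lambda>x. D x \<ominus>\<^bsub>A\<^esub> (y0 \<otimes>\<^bsub>A\<^esub> x \<ominus>\<^bsub>A\<^esub> x \<otimes>\<^bsub>A\<^esub> y0))"
    by (rule RA.isD_diff[OF isD_D RA.isD_ad[OF y0_closed]])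
  then show ?thesis unfolding D1_def[abs_def] .
qed

lemma D1_closed: "a \<in> carrier A \<Longrightarrow> D1 a \<in> carrier A"
  using isD_D1 RA.isD_closed by blast

lemma D1_EE: "D1 (EE v) = \<zero>\<^bsub>A\<^esub>"
proof -
  have c: "y0 \<otimes>\<^bsub>A\<^esub> EE v \<ominus>\<^bsub>A\<^esub> EE v \<otimes>\<^bsub>A\<^esub> y0 \<in> carrier A"
    using y0_closed gens_A by simp
  show ?thesis unfolding D1_def D_EE using c by (simp add: RA.minus_eq RA.r_neg)
qed

lemma pr_EE_corner:
  assumes x: "x \<in> kQ_carrier"
  shows "EE (if l then V1 else V2) \<otimes>\<^bsub>A\<^esub> pr x \<otimes>\<^bsub>A\<^esub> EE (if r then V3 else V2) = pr (poly l r (\<lambda>n. x (mk l n r)))"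
proof -
  have "EE (if l then V1 else V2) \<otimes>\<^bsub>A\<^esub> pr x \<otimes>\<^bsub>A\<^esub> EE (if r then V3 else V2)
        = pr (pa_mult (pa_mult (ee (if l then V1 else V2)) x) (ee (if r then V3 else V2)))"
    using x by (simp add: EE_def pr_mult gen_closed pa_mult_closed)
  also have "\<dots> = pr (poly l r (\<lambda>n. x (mk l n r)))"
    using corner[OF x, of l r] by (simp add: ee_def)
  finally show ?thesis .
qed

lemma D1_gen_form:
  assumes g: "g \<in> kQ_carrier" and gc: "g = pa_mult (pa_mult (ee (if l then V1 else V2)) g) (ee (if r then V3 else V2))"
  shows "\<exists>f. fin f \<and> D1 (pr g) = pr (poly l r f)"
proof -
  have G: "pr g \<in> carrier A" using g by (simp add: pr_closed)
  have "pr g = EE (if l then V1 else V2) \<otimes>\<^bsub>A\<^esub> pr g \<otimes>\<^bsub>A\<^esub> EE (if r then V3 else V2)"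
    using g by (subst gc) (simp add: EE_def pr_mult gen_closed pa_mult_closed)
  then have "D1 (pr g) = EE (if l then V1 else V2) \<otimes>\<^bsub>A\<^esub> D1 (pr g) \<otimes>\<^bsub>A\<^esub> EE (if r then V3 else V2)"
    by (intro RA.isD_corner[OF isD_D1 D1_EE D1_EE gens_A(1) G gens_A(1)])
  moreover obtain x where x: "x \<in> kQ_carrier" "D1 (pr g) = pr x"
    using pr_surj D1_closed[OF G] by blast
  ultimately have "D1 (pr g) = pr (poly l r (\<lambda>n. x (mk l n r)))"
    using pr_EE_corner[OF x(1)] by simp
  then show ?thesis using fin_coeff[OF x(1)] by blast
qed

definition fa :: "nat \<Rightarrow> 'k" where "fa = (SOME f. fin f \<and> D1 AL = pr (poly True False f))"
definition fb :: "nat \<Rightarrow> 'k" where "fb = (SOME f. fin f \<and> D1 (BB 1) = pr (poly False False f))"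
definition fc :: "nat \<Rightarrow> 'k" where "fc = (SOME f. fin f \<and> D1 GA = pr (poly False True f))"

lemma fa: "fin fa \<and> D1 AL = pr (poly True False fa)"
proof -
  have "\<exists>f. fin f \<and> D1 (pr al) = pr (poly True False f)"
    using D1_gen_form[OF gen_closed(2), of True False] corner_al by simp
  then show ?thesis unfolding fa_def AL_def by (rule someI_ex)
qed

lemma fb: "fin fb \<and> D1 (BB 1) = pr (poly False False fb)"
proof -
  have "\<exists>f. fin f \<and> D1 (pr (bb 1)) = pr (poly False False f)"
    using D1_gen_form[OF gen_closed(4)[of 1], of False False] corner_bb1 by simp
  then show ?thesis unfolding fb_def BB_def by (rule someI_ex)
qed

lemma fc: "fin fc \<and> D1 GA = pr (poly False True fc)"
proof -
  have "\<exists>f. fin f \<and> D1 (pr ga) = pr (poly False True f)"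
    using D1_gen_form[OF gen_closed(3), of False True] corner_ga by simp
  then show ?thesis unfolding fc_def GA_def by (rule someI_ex)
qed

end

lemma sh_step:
  fixes f :: "nat \<Rightarrow> 'k::field"
  shows "sh 1 (\<lambda>m. of_nat n * sh (n - 1) f m) m + sh n f m = of_nat (Suc n) * sh n f m"
proof (cases n)
  case 0 then show ?thesis by (simp add: sh_def)
next
  case (Suc k)
  show ?thesis
  proof (cases "n \<le> m")
    case True
    then have "sh 1 (\<lambda>m. of_nat n * sh (n - 1) f m) m = of_nat n * sh n f m"
      using Suc True by (auto simp: sh_def)
    then show ?thesis by (simp add: algebra_simps)
  next
    case False
    then show ?thesis using Suc by (auto simp: sh_def)
  qed
qed

lemma sh_add: "sh k (\<lambda>m. f m + g m) m = sh k f m + sh k g m"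
  by (simp add: sh_def)

context QS
begin

lemma fin_fs: "fin fa" "fin fb" "fin fc"
  using fa fb fc by auto

lemma BB_Suc: "BB (Suc n) = BB n \<otimes>\<^bsub>A\<^esub> BB 1"
  unfolding BB_def bb_Suc[of n] by (rule pr_mult) (simp_all only: gen_closed)

lemma BB_0: "BB 0 = EE V2"
  by (simp add: BB_def EE_def ee2)

lemma fin_bcoef: "fin (\<lambda>m. of_nat n * sh (n - 1) fb m)"
  by (intro fin_scale fin_sh fin_fs)

lemma DBB: "D1 (BB n) = pr (poly False False (\<lambda>m. of_nat n * sh (n - 1) fb m))"
proof (induction n)
  case 0
  have "(\<lambda>m. of_nat 0 * sh (0 - 1) fb m) = (\<lambda>_. 0::'k)" by simp
  then show ?case by (simp add: BB_0 D1_EE poly_zero pr_zero)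
next
  case (Suc n)
  define g where "g = (\<lambda>m. of_nat n * sh (n - 1) fb m)"
  have fg: "fin g" unfolding g_def by (rule fin_bcoef)
  have "D1 (BB (Suc n)) = D1 (BB n) \<otimes>\<^bsub>A\<^esub> BB 1 \<oplus>\<^bsub>A\<^esub> BB n \<otimes>\<^bsub>A\<^esub> D1 (BB 1)"
    unfolding BB_Suc by (rule RA.isD_mult[OF isD_D1 gens_A(4) gens_A(4)])
  also have "\<dots> = pr (poly False False g) \<otimes>\<^bsub>A\<^esub> pr (bb 1) \<oplus>\<^bsub>A\<^esub> pr (bb n) \<otimes>\<^bsub>A\<^esub> pr (poly False False fb)"
    using Suc fb by (simp add: g_def BB_def)
  also have "\<dots> = pr (pa_add (pa_mult (poly False False g) (bb 1)) (pa_mult (bb n) (poly False False fb)))"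
    using fg fin_fs by (simp add: pr_mult pr_add poly_closed gen_closed pa_mult_closed)
  also have "pa_add (pa_mult (poly False False g) (bb 1)) (pa_mult (bb n) (poly False False fb))
      = poly False False (\<lambda>m. sh 1 g m + sh n fb m)"
    by (simp add: bb_def poly_mult_mk_right poly_mult_mk_left poly_add)
  also have "(\<lambda>m. sh 1 g m + sh n fb m) = (\<lambda>m. of_nat (Suc n) * sh (Suc n - 1) fb m)"
    by (rule ext) (simp only: g_def sh_step diff_Suc_1)
  finally show ?case .
qed

definition wf :: "nat \<Rightarrow> nat \<Rightarrow> 'k" where
  "wf n m = sh n fa m + of_nat n * sh (n - 1) fb m + sh n fc m"

lemma fin_wf: "fin (wf n)"
  unfolding wf_def by (intro fin_add fin_sh fin_bcoef fin_fs)

lemma pr_abg: "pr (abg n) = AL \<otimes>\<^bsub>A\<^esub> BB n \<otimes>\<^bsub>A\<^esub> GA"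
  by (simp add: abg_prod AL_def BB_def GA_def pr_mult gen_closed pa_mult_closed)

lemma DABG: "D1 (pr (abg n)) = pr (poly True True (wf n))"
proof -
  define g where "g = (\<lambda>m. of_nat n * sh (n - 1) fb m)"
  have fg: "fin g" unfolding g_def by (rule fin_bcoef)
  have "D1 (pr (abg n)) = D1 AL \<otimes>\<^bsub>A\<^esub> BB n \<otimes>\<^bsub>A\<^esub> GA \<oplus>\<^bsub>A\<^esub> AL \<otimes>\<^bsub>A\<^esub> D1 (BB n) \<otimes>\<^bsub>A\<^esub> GA
        \<oplus>\<^bsub>A\<^esub> AL \<otimes>\<^bsub>A\<^esub> BB n \<otimes>\<^bsub>A\<^esub> D1 GA"
    unfolding pr_abg by (rule RA.isD_mult3[OF isD_D1 gens_A(2) gens_A(4) gens_A(3)])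
  also have "\<dots> = pr (poly True False fa) \<otimes>\<^bsub>A\<^esub> pr (bb n) \<otimes>\<^bsub>A\<^esub> pr ga
        \<oplus>\<^bsub>A\<^esub> pr al \<otimes>\<^bsub>A\<^esub> pr (poly False False g) \<otimes>\<^bsub>A\<^esub> pr ga
        \<oplus>\<^bsub>A\<^esub> pr al \<otimes>\<^bsub>A\<^esub> pr (bb n) \<otimes>\<^bsub>A\<^esub> pr (poly False True fc)"
    using fa fc DBB[of n] by (simp add: g_def AL_def BB_def GA_def)
  also have "\<dots> = pr (pa_add (pa_add (pa_mult (pa_mult (poly True False fa) (bb n)) ga)
                    (pa_mult (pa_mult al (poly False False g)) ga))
                    (pa_mult (pa_mult al (bb n)) (poly False True fc)))"
    using fg fin_fs by (simp add: pr_mult pr_add poly_closed gen_closed pa_mult_closed pa_add_closed)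
  also have "pa_add (pa_add (pa_mult (pa_mult (poly True False fa) (bb n)) ga)
                    (pa_mult (pa_mult al (poly False False g)) ga))
                    (pa_mult (pa_mult al (bb n)) (poly False True fc))
           = poly True True (\<lambda>m. sh n fa m + g m + sh n fc m)"
    by (simp add: bb_def al_def ga_def poly_mult_mk_right poly_mult_mk_left poly_add pbasis_mult_mk)
  also have "(\<lambda>m. sh n fa m + g m + sh n fc m) = wf n"
    by (rule ext) (simp add: wf_def g_def)
  finally show ?thesis .
qed

lemma p2: "p \<ge> 2"
proof -
  have "p \<noteq> 1" using charp CHAR_not_1[where 'a='k] by auto
  then show ?thesis using ppos by linarith
qed

lemma of_nat_p: "of_nat p = (0::'k)"
  using of_nat_CHAR[where 'a='k] charp by simp

lemma of_nat_2p1: "of_nat (2*p+1) = (1::'k)"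
  by (simp add: of_nat_p)

lemma of_nat_6p1: "of_nat (6*p+1) = (1::'k)"
  by (simp add: of_nat_p)

lemma D1_zero: "D1 \<zero>\<^bsub>A\<^esub> = \<zero>\<^bsub>A\<^esub>"
  by (rule RA.isD_zero[OF isD_D1])

lemma in_I_pr: "x \<in> I \<Longrightarrow> pr x = \<zero>\<^bsub>A\<^esub>"
proof -
  assume x: "x \<in> I"
  then have "x \<in> kQ_carrier" using additive_subgroup.a_subset[OF ideal.axioms(1)[OF idl]] by auto
  then show ?thesis using pr_zero_iff x by blast
qed

lemma pr_zero_I: "x \<in> kQ_carrier \<Longrightarrow> pr x = \<zero>\<^bsub>A\<^esub> \<Longrightarrow> x \<in> I"
  using pr_zero_iff by blast

lemma fb0: "fb 0 = 0"
proof -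
  define N where "N = 6*p+1"
  have "bb N \<in> I" using gens_I[of p] unfolding Igens_def betapow_N N_def bb_def by blast
  then have "pr (poly False False (\<lambda>m. of_nat N * sh (N - 1) fb m)) = \<zero>\<^bsub>A\<^esub>"
    using DBB[of N] in_I_pr D1_zero by (simp add: BB_def)
  then have "poly False False (\<lambda>m. of_nat N * sh (N - 1) fb m) \<in> I"
    by (rule pr_zero_I[rotated]) (intro poly_closed fin_bcoef)
  then have "\<forall>n<N. of_nat N * sh (N - 1) fb n = 0"
    using poly_in_I[OF ppos, of False False "\<lambda>m. of_nat N * sh (N - 1) fb m"] by (simp only: N_def) simp
  then have "of_nat N * sh (N - 1) fb (N - 1) = 0" by (simp add: N_def)
  moreover have "sh (N - 1) fb (N - 1) = fb 0" by (simp add: sh_def)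
  moreover have "of_nat N = (1::'k)" unfolding N_def by (rule of_nat_6p1)
  ultimately show ?thesis by simp
qed

lemma Vc_wf:
  assumes "x \<in> I" and "D1 (pr x) = pr (poly True True w)" and "fin w"
  shows "Vc p w"
proof -
  have "pr (poly True True w) = \<zero>\<^bsub>A\<^esub>" using assms(1,2) in_I_pr D1_zero by simp
  then have "poly True True w \<in> I" by (rule pr_zero_I[rotated]) (rule poly_closed[OF assms(3)])
  then show ?thesis using poly_in_I[OF ppos, of True True w] by simp
qed

definition s :: "nat \<Rightarrow> 'k" where "s m = fa m + fc m"

lemma C1: "Vc p s"
proof -
  have "abg 0 \<in> I" using gens_I[of p] unfolding Igens_def abg_mk abg_def by blast
  then have "Vc p (wf 0)" using DABG[of 0] fin_wf by (rule Vc_wf)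
  moreover have "wf 0 = s" by (rule ext) (simp add: wf_def s_def)
  ultimately show ?thesis by simp
qed

lemma C2: "Vc p (\<lambda>m. sh 1 s m + fb m + sh 2 s m + 2 * sh 1 fb m)"
proof -
  have "pa_add (abg 1) (abg 2) \<in> I" using gens_I[of p] unfolding Igens_def abg_mk abg_def by blast
  moreover have "D1 (pr (pa_add (abg 1) (abg 2))) = pr (poly True True (\<lambda>m. wf 1 m + wf 2 m))"
  proof -
    have "D1 (pr (pa_add (abg 1) (abg 2))) = D1 (pr (abg 1)) \<oplus>\<^bsub>A\<^esub> D1 (pr (abg 2))"
      by (simp add: pr_add gen_closed RA.isD_add[OF isD_D1] pr_closed)
    also have "\<dots> = pr (poly True True (\<lambda>m. wf 1 m + wf 2 m))"
      by (simp add: DABG pr_add[symmetric] poly_closed fin_wf poly_add)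
    finally show ?thesis .
  qed
  ultimately have "Vc p (\<lambda>m. wf 1 m + wf 2 m)"
    by (rule Vc_wf) (intro fin_add fin_wf)
  moreover have "(\<lambda>m. wf 1 m + wf 2 m) = (\<lambda>m. sh 1 s m + fb m + sh 2 s m + 2 * sh 1 fb m)"
    by (rule ext) (simp add: wf_def s_def[abs_def] sh_add algebra_simps)
  ultimately show ?thesis by simp
qed

lemma C3: "Vc p (\<lambda>m. sh (2*p+1) s m + sh (2*p) fb m)"
proof -
  have "abg (2*p+1) \<in> I" using gens_I[of p] unfolding Igens_def abg_mk abg_def by blast
  then have "Vc p (wf (2*p+1))" using DABG fin_wf by (rule Vc_wf)
  moreover have "wf (2*p+1) = (\<lambda>m. sh (2*p+1) s m + sh (2*p) fb m)"
    by (rule ext) (simp add: wf_def s_def[abs_def] sh_add of_nat_p algebra_simps)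
  ultimately show ?thesis by simp
qed

lemma fb_small: "\<forall>i<6*p+1. fb i = 0"
  and s_small: "\<forall>i. 1 \<le> i \<and> i < 6*p+1 \<longrightarrow> s i = 0"
  using linalg[OF p2 fb0 C1 C2 C3] by blast+

end

context ring
begin

lemma diff0_eq: "a \<in> carrier R \<Longrightarrow> b \<in> carrier R \<Longrightarrow> a \<ominus> b = \<zero> \<Longrightarrow> a = b"
proof -
  assume ab: "a \<in> carrier R" "b \<in> carrier R" and h: "a \<ominus> b = \<zero>"
  have "a = (a \<ominus> b) \<oplus> b" using ab by (simp add: minus_eq a_assoc l_neg)
  also have "\<dots> = b" using h ab by simp
  finally show ?thesis .
qed

lemma ad_sum_split:
  assumes c: "d \<in> carrier R" "y0 \<in> carrier R" "y1 \<in> carrier R" "x \<in> carrier R"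
  shows "d \<ominus> ((y0 \<oplus> y1) \<otimes> x \<ominus> x \<otimes> (y0 \<oplus> y1)) = (d \<ominus> (y0 \<otimes> x \<ominus> x \<otimes> y0)) \<ominus> (y1 \<otimes> x \<ominus> x \<otimes> y1)"
  using c by (simp add: ring_simprules l_distr r_distr minus_eq minus_add a_ac)

lemma ad_scal:
  assumes c: "sc \<in> carrier R" "y \<in> carrier R" "x \<in> carrier R" and comm: "y \<otimes> sc = sc \<otimes> y"
  shows "y \<otimes> (sc \<otimes> x) \<ominus> (sc \<otimes> x) \<otimes> y = sc \<otimes> (y \<otimes> x \<ominus> x \<otimes> y)"
proof -
  have "y \<otimes> (sc \<otimes> x) = sc \<otimes> (y \<otimes> x)" using c comm by (simp add: m_assoc[symmetric])
  then show ?thesis using c by (simp add: minus_eq r_distr r_minus m_assoc)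
qed

lemma scal_diff:
  assumes c: "sc \<in> carrier R" "a \<in> carrier R" "b \<in> carrier R"
  shows "sc \<otimes> a \<ominus> sc \<otimes> b = sc \<otimes> (a \<ominus> b)"
  using c by (simp add: minus_eq r_distr r_minus)

end

context QS
begin

definition nfa :: "nat \<Rightarrow> 'k" where "nfa m = - fa m"

definition Y1 :: "qpath \<Rightarrow> 'k" where
  "Y1 = pa_add (poly False False nfa) (pa_smult (- s 0) (ee V3))"

lemma fin_nfa: "fin nfa" unfolding nfa_def[abs_def] by (intro fin_neg fin_fs)

lemma Y1_closed: "Y1 \<in> kQ_carrier"
  unfolding Y1_def by (intro pa_add_closed poly_closed fin_nfa smult_closed gen_closed)

definition y1 :: "(qpath \<Rightarrow> 'k) set" where "y1 = pr Y1"

lemma y1_closed: "y1 \<in> carrier A" by (simp add: y1_def pr_closed Y1_closed)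

definition K :: "(qpath \<Rightarrow> 'k) \<Rightarrow> qpath \<Rightarrow> 'k" where
  "K g = pa_add (pa_mult Y1 g) (\<lambda>q. - pa_mult g Y1 q)"

lemma ad_y1_pr: "g \<in> kQ_carrier \<Longrightarrow> y1 \<otimes>\<^bsub>A\<^esub> pr g \<ominus>\<^bsub>A\<^esub> pr g \<otimes>\<^bsub>A\<^esub> y1 = pr (K g)"
  by (simp add: y1_def K_def pr_diff[symmetric] pr_mult[symmetric] Y1_closed pa_mult_closed)

lemma Y1_mult: "pa_mult Y1 g = pa_add (pa_mult (poly False False nfa) g) (pa_smult (- s 0) (pa_mult (ee V3) g))"
  by (simp add: Y1_def pa_mult_add_left pa_mult_smult_left)

lemma mult_Y1: "pa_mult g Y1 = pa_add (pa_mult g (poly False False nfa)) (pa_smult (- s 0) (pa_mult g (ee V3)))"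
  by (simp add: Y1_def pa_mult_add_right pa_mult_smult_right)

lemma e3_pbasis_mk: "pa_mult (ee V3) (pbasis (mk l n r)) = (\<lambda>_. 0)"
  unfolding ee_def pbasis_mk by (rule poly_mult_e3_left)

lemma pbasis_mk_e3: "pa_mult (pbasis (mk l n r)) (ee V3) = (if r then pbasis (mk l n r) else (\<lambda>_. 0))"
  unfolding ee_def pbasis_mk by (rule poly_mult_e3_right)

lemma K_ee: "K (ee v) = (\<lambda>_. 0)"
proof -
  consider "v = V1" | "v = V2" | "v = V3" by (cases v) auto
  then show ?thesis
  proof cases
    case 1
    show ?thesis unfolding K_def Y1_mult mult_Y1 1
      by (rule ext) (simp add: ee_mult poly_mult_e1_left poly_mult_e1_right[unfolded ee_def[symmetric]]
            poly_mult_e1_left[unfolded ee_def[symmetric]] pa_add_def pa_smult_def)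
  next
    case 2
    show ?thesis unfolding K_def Y1_mult mult_Y1 2 ee2 bb_def
      by (rule ext) (simp add: poly_mult_mk_left poly_mult_mk_right e3_pbasis_mk pbasis_mk_e3 pa_add_def pa_smult_def)
  next
    case 3
    show ?thesis unfolding K_def Y1_mult mult_Y1 3
      by (rule ext) (simp add: ee_mult poly_mult_e3_right[unfolded ee_def[symmetric]]
            poly_mult_e3_left[unfolded ee_def[symmetric]] pa_add_def pa_smult_def)
  qed
qed

lemma K_al: "K al = poly True False fa"
  unfolding K_def Y1_mult mult_Y1 al_def
  by (rule ext) (simp add: poly_mult_mkT_right poly_mult_mk_left e3_pbasis_mk pbasis_mk_e3
      pa_add_def pa_smult_def poly_def nfa_def split: option.splits)

lemma K_bb1: "K (bb 1) = (\<lambda>_. 0)"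
  unfolding K_def Y1_mult mult_Y1 bb_def
  by (rule ext) (simp add: poly_mult_mk_right poly_mult_mk_left e3_pbasis_mk pbasis_mk_e3
      pa_add_def pa_smult_def)

lemma K_ga: "K ga = poly False True (\<lambda>m. nfa m + s 0 * delta 0 m)"
  apply (simp only: K_def Y1_mult mult_Y1 ga_def poly_mult_mk_right poly_mult_mkT_left e3_pbasis_mk
      pbasis_mk_e3 if_False if_True sh_0)
  apply (simp only: pbasis_mk)
  apply (rule ext)
  apply (simp add: pa_add_def pa_smult_def poly_def split: option.splits)
  done

lemma D1_gens_ad:
  "D1 (EE v) = y1 \<otimes>\<^bsub>A\<^esub> EE v \<ominus>\<^bsub>A\<^esub> EE v \<otimes>\<^bsub>A\<^esub> y1"
  "D1 AL = y1 \<otimes>\<^bsub>A\<^esub> AL \<ominus>\<^bsub>A\<^esub> AL \<otimes>\<^bsub>A\<^esub> y1"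
  "D1 (BB 1) = y1 \<otimes>\<^bsub>A\<^esub> BB 1 \<ominus>\<^bsub>A\<^esub> BB 1 \<otimes>\<^bsub>A\<^esub> y1"
  "D1 GA = y1 \<otimes>\<^bsub>A\<^esub> GA \<ominus>\<^bsub>A\<^esub> GA \<otimes>\<^bsub>A\<^esub> y1"
proof -
  show "D1 (EE v) = y1 \<otimes>\<^bsub>A\<^esub> EE v \<ominus>\<^bsub>A\<^esub> EE v \<otimes>\<^bsub>A\<^esub> y1"
    by (simp add: EE_def ad_y1_pr gen_closed K_ee D1_EE[unfolded EE_def] pr_zero)
  show "D1 AL = y1 \<otimes>\<^bsub>A\<^esub> AL \<ominus>\<^bsub>A\<^esub> AL \<otimes>\<^bsub>A\<^esub> y1"
    by (simp add: AL_def ad_y1_pr gen_closed K_al fa[unfolded AL_def])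
  have "pr (poly False False fb) = \<zero>\<^bsub>A\<^esub>"
    by (rule in_I_pr, rule poly_small_in_I) (use fin_fs fb_small in auto)
  moreover have "y1 \<otimes>\<^bsub>A\<^esub> BB 1 \<ominus>\<^bsub>A\<^esub> BB 1 \<otimes>\<^bsub>A\<^esub> y1 = pr (K (bb 1))"
    unfolding BB_def by (rule ad_y1_pr[OF gen_closed(4)])
  ultimately show "D1 (BB 1) = y1 \<otimes>\<^bsub>A\<^esub> BB 1 \<ominus>\<^bsub>A\<^esub> BB 1 \<otimes>\<^bsub>A\<^esub> y1"
    using fb by (simp only: K_bb1 pr_zero)
  have fk: "fin (\<lambda>m. nfa m + s 0 * delta 0 m)" by (intro fin_add fin_nfa fin_scale fin_delta)
  have "pr (poly False True fc) = pr (poly False True (\<lambda>m. nfa m + s 0 * delta 0 m))"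
  proof (rule pr_eqI)
    show "poly False True fc \<in> kQ_carrier" by (intro poly_closed fin_fs)
    show "poly False True (\<lambda>m. nfa m + s 0 * delta 0 m) \<in> kQ_carrier" by (intro poly_closed fk)
    have "pa_add (poly False True fc) (\<lambda>q. - poly False True (\<lambda>m. nfa m + s 0 * delta 0 m) q)
          = poly False True (\<lambda>m. fc m + - (nfa m + s 0 * delta 0 m))"
      by (rule ext) (simp add: pa_add_def poly_def split: option.splits)
    also have "\<dots> \<in> I"
    proof (rule poly_small_in_I)
      show "fin (\<lambda>m. fc m + - (nfa m + s 0 * delta 0 m))"
        by (intro fin_add fin_neg fk fin_fs)
      fix i assume "i < 6*p+1"
      then show "fc i + - (nfa i + s 0 * delta 0 i) = 0"
        using s_small by (cases i) (auto simp: nfa_def s_def delta_def add.commute)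
    qed
    finally show "pa_add (poly False True fc) (\<lambda>q. - poly False True (\<lambda>m. nfa m + s 0 * delta 0 m) q) \<in> I" .
  qed
  then show "D1 GA = y1 \<otimes>\<^bsub>A\<^esub> GA \<ominus>\<^bsub>A\<^esub> GA \<otimes>\<^bsub>A\<^esub> y1"
    by (simp add: GA_def ad_y1_pr gen_closed K_ga fc[unfolded GA_def])
qed

end

context QS
begin

definition yy :: "(qpath \<Rightarrow> 'k) set" where "yy = y0 \<oplus>\<^bsub>A\<^esub> y1"

lemma yy_closed: "yy \<in> carrier A" by (simp add: yy_def y0_closed y1_closed)

definition F :: "(qpath \<Rightarrow> 'k) set \<Rightarrow> (qpath \<Rightarrow> 'k) set" where
  "F x = D x \<ominus>\<^bsub>A\<^esub> (yy \<otimes>\<^bsub>A\<^esub> x \<ominus>\<^bsub>A\<^esub> x \<otimes>\<^bsub>A\<^esub> yy)"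

lemma isD_F: "isD A F"
proof -
  have "isD A (\<lambda>x. D x \<ominus>\<^bsub>A\<^esub> (yy \<otimes>\<^bsub>A\<^esub> x \<ominus>\<^bsub>A\<^esub> x \<otimes>\<^bsub>A\<^esub> yy))"
    by (rule RA.isD_diff[OF isD_D RA.isD_ad[OF yy_closed]])
  then show ?thesis unfolding F_def[abs_def] .
qed

lemma F_alt: "x \<in> carrier A \<Longrightarrow> F x = D1 x \<ominus>\<^bsub>A\<^esub> (y1 \<otimes>\<^bsub>A\<^esub> x \<ominus>\<^bsub>A\<^esub> x \<otimes>\<^bsub>A\<^esub> y1)"
  unfolding F_def D1_def yy_def
  by (rule RA.ad_sum_split) (simp_all add: D_closed y0_closed y1_closed)

lemma F_sc: "a \<in> carrier A \<Longrightarrow> F (sc c \<otimes>\<^bsub>A\<^esub> a) = sc c \<otimes>\<^bsub>A\<^esub> F a"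
proof -
  assume a: "a \<in> carrier A"
  have comm: "yy \<otimes>\<^bsub>A\<^esub> sc c = sc c \<otimes>\<^bsub>A\<^esub> yy" using sc_comm[OF yy_closed] by simp
  have "F (sc c \<otimes>\<^bsub>A\<^esub> a) = sc c \<otimes>\<^bsub>A\<^esub> D a \<ominus>\<^bsub>A\<^esub> sc c \<otimes>\<^bsub>A\<^esub> (yy \<otimes>\<^bsub>A\<^esub> a \<ominus>\<^bsub>A\<^esub> a \<otimes>\<^bsub>A\<^esub> yy)"
    unfolding F_def D_sc[OF a, of c]
    using RA.ad_scal[OF sc_closed yy_closed a comm] by simp
  also have "\<dots> = sc c \<otimes>\<^bsub>A\<^esub> F a"
    unfolding F_def by (rule RA.scal_diff) (simp_all add: sc_closed D_closed a yy_closed)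
  finally show ?thesis .
qed

lemma F_zero_of: "x \<in> carrier A \<Longrightarrow> D1 x = y1 \<otimes>\<^bsub>A\<^esub> x \<ominus>\<^bsub>A\<^esub> x \<otimes>\<^bsub>A\<^esub> y1 \<Longrightarrow> F x = \<zero>\<^bsub>A\<^esub>"
proof -
  assume x: "x \<in> carrier A" and h: "D1 x = y1 \<otimes>\<^bsub>A\<^esub> x \<ominus>\<^bsub>A\<^esub> x \<otimes>\<^bsub>A\<^esub> y1"
  have c: "y1 \<otimes>\<^bsub>A\<^esub> x \<ominus>\<^bsub>A\<^esub> x \<otimes>\<^bsub>A\<^esub> y1 \<in> carrier A" using x y1_closed by simp
  show ?thesis unfolding F_alt[OF x] h using c by (simp add: RA.minus_eq RA.r_neg)
qed

lemma F_gens: "F (EE v) = \<zero>\<^bsub>A\<^esub>" "F AL = \<zero>\<^bsub>A\<^esub>" "F (BB 1) = \<zero>\<^bsub>A\<^esub>" "F GA = \<zero>\<^bsub>A\<^esub>"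
  by (rule F_zero_of[OF gens_A(1) D1_gens_ad(1)], rule F_zero_of[OF gens_A(2) D1_gens_ad(2)],
      rule F_zero_of[OF gens_A(4) D1_gens_ad(3)], rule F_zero_of[OF gens_A(3) D1_gens_ad(4)])

lemma F_mult0: "a \<in> carrier A \<Longrightarrow> b \<in> carrier A \<Longrightarrow> F a = \<zero>\<^bsub>A\<^esub> \<Longrightarrow> F b = \<zero>\<^bsub>A\<^esub> \<Longrightarrow> F (a \<otimes>\<^bsub>A\<^esub> b) = \<zero>\<^bsub>A\<^esub>"
  by (simp add: RA.isD_mult[OF isD_F])

lemma F_BB: "F (BB n) = \<zero>\<^bsub>A\<^esub>"
proof (induction n)
  case 0 then show ?case by (simp add: BB_0 F_gens)
next
  case (Suc n) then show ?case
    unfolding BB_Suc by (rule F_mult0[OF gens_A(4) gens_A(4) _ F_gens(3)])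
qed

lemma F_pbasis: "valid_path q \<Longrightarrow> F (pr (pbasis q)) = \<zero>\<^bsub>A\<^esub>"
proof (erule valid_path_cases)
  assume "q = Triv V1" then show ?thesis using F_gens(1)[of V1] by (simp add: EE_def ee_def)
next
  assume "q = Triv V3" then show ?thesis using F_gens(1)[of V3] by (simp add: EE_def ee_def)
next
  fix l n r assume q: "q = mk l n r"
  have BBn: "pr (bb n) = BB n" by (simp add: BB_def)
  show ?thesis
  proof (cases l; cases r)
    assume "l" "r"
    then have "pr (pbasis q) = AL \<otimes>\<^bsub>A\<^esub> BB n \<otimes>\<^bsub>A\<^esub> GA"
      using q by (simp add: mk_prods pr_mult gen_closed pa_mult_closed AL_def BB_def GA_def)
    then show ?thesis
      by (simp add: F_mult0 gens_A F_gens F_BB)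
  next
    assume "l" "\<not> r"
    then have "pr (pbasis q) = AL \<otimes>\<^bsub>A\<^esub> BB n"
      using q by (simp add: mk_prods pr_mult gen_closed pa_mult_closed AL_def BB_def)
    then show ?thesis
      by (simp add: F_mult0 gens_A F_gens F_BB)
  next
    assume "\<not> l" "r"
    then have "pr (pbasis q) = BB n \<otimes>\<^bsub>A\<^esub> GA"
      using q by (simp add: mk_prods pr_mult gen_closed pa_mult_closed BB_def GA_def)
    then show ?thesis
      by (simp add: F_mult0 gens_A F_gens F_BB)
  next
    assume "\<not> l" "\<not> r"
    then have "pr (pbasis q) = BB n"
      using q by (simp add: mk_prods BB_def)
    then show ?thesis by (simp add: F_BB)
  qed
qed

lemma F_pr: "x \<in> kQ_carrier \<Longrightarrow> F (pr x) = \<zero>\<^bsub>A\<^esub>"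
proof (erule carrier_induct)
  show "F (pr (\<lambda>_. 0)) = \<zero>\<^bsub>A\<^esub>" by (simp add: pr_zero RA.isD_zero[OF isD_F])
next
  fix y :: "qpath \<Rightarrow> 'k" and q and c :: 'k
  assume y: "y \<in> kQ_carrier" and Fy: "F (pr y) = \<zero>\<^bsub>A\<^esub>" and q: "valid_path q"
  have pq: "(pbasis q :: qpath \<Rightarrow> 'k) \<in> kQ_carrier" using q by (rule pbasis_closed)
  have "pr (pa_add y (pa_smult c (pbasis q))) = pr y \<oplus>\<^bsub>A\<^esub> sc c \<otimes>\<^bsub>A\<^esub> pr (pbasis q)"
    using y pq by (simp add: pr_add smult_closed pr_smult)
  then have "F (pr (pa_add y (pa_smult c (pbasis q)))) = F (pr y) \<oplus>\<^bsub>A\<^esub> F (sc c \<otimes>\<^bsub>A\<^esub> pr (pbasis q))"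
    using y pq by (simp add: RA.isD_add[OF isD_F] pr_closed sc_closed)
  also have "\<dots> = \<zero>\<^bsub>A\<^esub>"
    using Fy F_sc[of "pr (pbasis q)" c] F_pbasis[OF q] pq by (simp add: pr_closed sc_closed)
  finally show "F (pr (pa_add y (pa_smult c (pbasis q)))) = \<zero>\<^bsub>A\<^esub>" .
qed

lemma inner: "is_inner_derivation A D"
  unfolding is_inner_derivation_def
proof (intro bexI[of _ yy] ballI)
  fix x assume x: "x \<in> carrier A"
  then obtain x' where x': "x' \<in> kQ_carrier" "x = pr x'" using pr_surj by blast
  have "F x = \<zero>\<^bsub>A\<^esub>" using F_pr[OF x'(1)] x'(2) by simp
  then show "D x = yy \<otimes>\<^bsub>A\<^esub> x \<ominus>\<^bsub>A\<^esub> x \<otimes>\<^bsub>A\<^esub> yy"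
    unfolding F_def by (rule RA.diff0_eq[rotated 2]) (simp_all add: D_closed x yy_closed)
qed (rule yy_closed)

end

theorem mainTheorem19:
  fixes p :: nat
  assumes "CHAR('k::field) = p" and "p > 0"
  shows "admissible (Iideal p :: (qpath \<Rightarrow> 'k) set)
         \<and> HH1_vanishes (Lambda p :: (qpath \<Rightarrow> 'k) set ring) (Lscalar p)"
proof
  show "admissible (Iideal p :: (qpath \<Rightarrow> 'k) set)" by (rule admissible_I[OF assms(2)])
  show "HH1_vanishes (Lambda p :: (qpath \<Rightarrow> 'k) set ring) (Lscalar p)"
    unfolding HH1_vanishes_def
  proof (intro allI impI)
    fix D :: "(qpath \<Rightarrow> 'k) set \<Rightarrow> (qpath \<Rightarrow> 'k) set"
    assume d: "is_derivation (Lambda p :: (qpath \<Rightarrow> 'k) set ring) (Lscalar p) D"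
    interpret QS p D by unfold_locales (use assms d in auto)
    show "is_inner_derivation (Lambda p :: (qpath \<Rightarrow> 'k) set ring) D" by (rule inner)
  qed
qed

end
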